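(* Let $\mathcal C$ be a Clifford circuit with linear outcome code $\mathcal O(\mathcal C)$ and let $u\in\mathcal O(\mathcal C)^\perp$ be nonzero. Let $\ell_u$ (resp. $\ell_u'$) be the minimum (resp. maximum) of $\ell_j$ over $j$ with $u_j=1$. If $\ell<\ell_u$ or $\ell\ge\ell_u'$ (with $0\le\ell\le\Delta$), then $\overleftarrow{F(u)}_{\ell+0.5}=I$.
   Context: A Clifford circuit on $n$ qubits is a finite sequence of operations, each a unitary Clifford gate or the measurement of a Hermitian $n$-qubit Pauli, each with a level in $\{1,2,\dots\}$; operations of equal level have disjoint supports and levels are nondecreasing; depth $\Delta$ = maximal level. In circuit order the $j$-th measurement measures $S_j$ at level $\ell_j$ ($j=1,\dots,m$); outcome $o_j=0$ for eigenvalue $+1$, $1$ for $-1$. The outcome code $\mathcal O(\mathcal C)$ is the set of outcome bit-strings occurring with nonzero probability for some input state; $\perp$ refers to $(u|v)=\sum u_iv_i\bmod2$. $\overline{\mathcal P}_N$ is the $N$-qubit Pauli group modulo phases. $U_\ell$ is the product of unitary gates of level $\ell$ (identity if none). Fault operators $F\in\overline{\mathcal P}_{n(\Delta+1)}$ act on qubits $(\ell+0.5,q)$, $0\le\ell\le\Delta$, $1\le q\le n$, with level components $F_{\ell+0.5}$; $\eta_{\ell+0.5}(P)$ is $P$ at level $\ell+0.5$ and $I$ elsewhere. Back-cumulant $\overleftarrow F$: start with $F$; for $\ell=\Delta,\dots,1$ replace $\overleftarrow F_{\ell-0.5}$ by $\overleftarrow F_{\ell-0.5}\cdot U_\ell^{-1}\overleftarrow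 F_{\ell+0.5}U_\ell$. $F(u)=\prod_j\eta_{\ell_j-0.5}(S_j^{u_j})$. *)

theory Defs
  imports Complex_Main "Jordan_Normal_Form.Matrix"
begin

text \<open>An n-qubit Pauli modulo phases is a pair (x,z) of bit vectors, the qubits being 0..n-1;
  it stands for X^x Z^z. Bits beyond n must be off.\<close>
type_synonym pauli = "(nat \<Rightarrow> bool) \<times> (nat \<Rightarrow> bool)"

definition pauli_on :: "nat \<Rightarrow> pauli \<Rightarrow> bool" where
  "pauli_on n p \<longleftrightarrow> (\<forall>q\<ge>n. \<not> fst p q \<and> \<not> snd p q)"

definition pid :: pauli where "pid = (\<lambda>_. False, \<lambda>_. False)"

definition ptimes :: "pauli \<Rightarrow> pauli \<Rightarrow> pauli" where
  "ptimes p p' = (\<lambda>q. fst p q \<noteq> fst p' q, \<lambda>q. snd p q \<noteq> snd p' q)"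

definition pX :: "nat \<Rightarrow> pauli" where "pX q = (\<lambda>i. i = q, \<lambda>_. False)"
definition pZ :: "nat \<Rightarrow> pauli" where "pZ q = (\<lambda>_. False, \<lambda>i. i = q)"

text \<open>Hermitian matrix representative i^(x.z) X^x Z^z on (C^2)^{\<otimes>n}; basis index b < 2^n,
  qubit q corresponds to bit q of b.\<close>
definition pmat :: "nat \<Rightarrow> pauli \<Rightarrow> complex mat" where
  "pmat n p = mat (2^n) (2^n) (\<lambda>(a,b).
     if (\<forall>q<n. bit a q \<longleftrightarrow> (bit b q \<noteq> fst p q))
     then \<i> ^ card {q. q < n \<and> fst p q \<and> snd p q} * (-1) ^ card {q. q < n \<and> snd p q \<and> bit b q}
     else 0)"

text \<open>Hermitian Pauli = sign bit (True meaning -1) and Pauli modulo phase.\<close>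
type_synonym hpauli = "bool \<times> pauli"

definition hpmat :: "nat \<Rightarrow> hpauli \<Rightarrow> complex mat" where
  "hpmat n S = (if fst S then -1 else 1) \<cdot>\<^sub>m pmat n (snd S)"

definition adj :: "complex mat \<Rightarrow> complex mat" where
  "adj A = mat (dim_col A) (dim_row A) (\<lambda>(i,j). cnj (A $$ (j,i)))"

definition is_clifford :: "nat \<Rightarrow> complex mat \<Rightarrow> bool" where
  "is_clifford n U \<longleftrightarrow> U \<in> carrier_mat (2^n) (2^n) \<and> adj U * U = 1\<^sub>m (2^n) \<and> U * adj U = 1\<^sub>m (2^n)
     \<and> (\<forall>p. pauli_on n p \<longrightarrow> (\<exists>S. pauli_on n (snd S) \<and> U * pmat n p * adj U = hpmat n S))"

text \<open>Support of a unitary: qubits on which it does not act as identity, i.e. with which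
  single-qubit X or Z it fails to commute.\<close>
definition gate_support :: "nat \<Rightarrow> complex mat \<Rightarrow> nat set" where
  "gate_support n U = {q. q < n \<and> \<not> (U * pmat n (pX q) = pmat n (pX q) * U \<and> U * pmat n (pZ q) = pmat n (pZ q) * U)}"

datatype op = Gate "complex mat" nat | Meas hpauli nat

fun op_level :: "op \<Rightarrow> nat" where
  "op_level (Gate U l) = l" | "op_level (Meas S l) = l"

fun op_support :: "nat \<Rightarrow> op \<Rightarrow> nat set" where
  "op_support n (Gate U l) = gate_support n U"
| "op_support n (Meas S l) = {q. q < n \<and> (fst (snd S) q \<or> snd (snd S) q)}"

fun op_ok :: "nat \<Rightarrow> op \<Rightarrow> bool" where
  "op_ok n (Gate U l) = is_clifford n U"
| "op_ok n (Meas S l) = pauli_on n (snd S)"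

definition wf_circuit :: "nat \<Rightarrow> op list \<Rightarrow> bool" where
  "wf_circuit n C \<longleftrightarrow> (\<forall>g\<in>set C. op_ok n g \<and> 1 \<le> op_level g)
     \<and> sorted (map op_level C)
     \<and> (\<forall>i j. i < j \<and> j < length C \<and> op_level (C!i) = op_level (C!j)
            \<longrightarrow> op_support n (C!i) \<inter> op_support n (C!j) = {})"

definition depth :: "op list \<Rightarrow> nat" where
  "depth C = Max (op_level ` set C)"

definition meas :: "op list \<Rightarrow> (hpauli \<times> nat) list" where
  "meas C = concat (map (\<lambda>g. case g of Meas S l \<Rightarrow> [(S,l)] | Gate U l \<Rightarrow> []) C)"

definition proj :: "nat \<Rightarrow> hpauli \<Rightarrow> bool \<Rightarrow> complex mat" where
  "proj n S b = (1/2) \<cdot>\<^sub>m (1\<^sub>m (2^n) + (if b then -1 else 1) \<cdot>\<^sub>m hpmat n S)"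

text \<open>Unnormalised post-measurement state for a given outcome string.\<close>
fun exec :: "nat \<Rightarrow> op list \<Rightarrow> bool list \<Rightarrow> complex vec \<Rightarrow> complex vec" where
  "exec n [] os v = v"
| "exec n (Gate U l # C) os v = exec n C os (U *\<^sub>v v)"
| "exec n (Meas S l # C) (b # os) v = exec n C os (proj n S b *\<^sub>v v)"
| "exec n (Meas S l # C) [] v = v"

definition sq_norm :: "complex vec \<Rightarrow> real" where
  "sq_norm v = (\<Sum>i<dim_vec v. (cmod (v $ i))^2)"

definition outcome_prob :: "nat \<Rightarrow> op list \<Rightarrow> complex vec \<Rightarrow> bool list \<Rightarrow> real" where
  "outcome_prob n C \<psi> os = sq_norm (exec n C os \<psi>)"

definition outcome_code :: "nat \<Rightarrow> op list \<Rightarrow> bool list set" where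
  "outcome_code n C = {os. length os = length (meas C) \<and>
      (\<exists>\<psi>. \<psi> \<in> carrier_vec (2^n) \<and> sq_norm \<psi> = 1 \<and> outcome_prob n C \<psi> os \<noteq> 0)}"

definition xor_list :: "bool list \<Rightarrow> bool list \<Rightarrow> bool list" where
  "xor_list a b = map2 (\<lambda>x y. x \<noteq> y) a b"

definition linear_code :: "nat \<Rightarrow> bool list set \<Rightarrow> bool" where
  "linear_code m Cd \<longleftrightarrow> (\<forall>a\<in>Cd. length a = m) \<and> replicate m False \<in> Cd
     \<and> (\<forall>a\<in>Cd. \<forall>b\<in>Cd. xor_list a b \<in> Cd)"

definition dual_code :: "nat \<Rightarrow> bool list set \<Rightarrow> bool list set" where
  "dual_code m Cd = {u. length u = m \<and> (\<forall>a\<in>Cd. even (card {j. j < m \<and> u!j \<and> a!j}))}"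

text \<open>A fault operator is given by its level components: F l is the component at level l+0.5.\<close>

definition U_level :: "nat \<Rightarrow> op list \<Rightarrow> nat \<Rightarrow> complex mat" where
  "U_level n C l = foldl (\<lambda>acc U. U * acc) (1\<^sub>m (2^n))
     (concat (map (\<lambda>g. case g of Gate U k \<Rightarrow> (if k = l then [U] else []) | Meas S k \<Rightarrow> []) C))"

definition conjP :: "nat \<Rightarrow> complex mat \<Rightarrow> pauli \<Rightarrow> pauli" where
  "conjP n U p = (THE q. pauli_on n q \<and> (\<exists>s. adj U * pmat n p * U = hpmat n (s, q)))"

function backcum :: "nat \<Rightarrow> op list \<Rightarrow> (nat \<Rightarrow> pauli) \<Rightarrow> nat \<Rightarrow> pauli" where
  "backcum n C F l = (if depth C \<le> l then F l
      else ptimes (F l) (conjP n (U_level n C (Suc l)) (backcum n C F (Suc l))))"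
  by pat_completeness auto
termination by (relation "measure (\<lambda>(n,C,F,l). depth C - l)") auto

text \<open>F(u) = prod_j eta_{l_j - 0.5}(S_j^{u_j}); component index l stands for level l+0.5.\<close>
definition Fu :: "op list \<Rightarrow> bool list \<Rightarrow> nat \<Rightarrow> pauli" where
  "Fu C u l = foldr (\<lambda>j acc. if u!j \<and> snd (meas C ! j) - 1 = l
                           then ptimes (snd (fst (meas C ! j))) acc else acc)
                [0..<length (meas C)] pid"

end

theory Submission
  imports Defs
begin

unbundle bit_operations_syntax



lemma lt_pow2_bits: "(a::nat) < 2^n \<longleftrightarrow> (\<forall>q\<ge>n. \<not> bit a q)"
proof
  assume "a < 2^n"
  then show "\<forall>q\<ge>n. \<not> bit a q"
    by (metis bit_take_bit_iff not_less take_bit_nat_eq_self_iff)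
next
  assume h: "\<forall>q\<ge>n. \<not> bit a q"
  have "take_bit n a = a"
    by (rule bit_eqI) (metis bit_take_bit_iff h not_less)
  then show "a < 2^n" by (simp add: take_bit_nat_eq_self_iff)
qed
lemma eq_by_bits: "(a::nat) < 2^n \<Longrightarrow> b < 2^n \<Longrightarrow> (\<forall>q<n. bit a q = bit b q) \<Longrightarrow> a = b"
  by (rule bit_eqI) (metis lt_pow2_bits not_less)

fun mk :: "nat \<Rightarrow> (nat \<Rightarrow> bool) \<Rightarrow> nat" where
  "mk 0 x = 0" | "mk (Suc k) x = of_bool (x 0) + 2 * mk k (x \<circ> Suc)"

lemma bit_mk: "bit (mk k x) q \<longleftrightarrow> q < k \<and> x q"
proof (induction k arbitrary: x q)
  case 0 then show ?case by simp
next
  case (Suc k) then show ?case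
    by (cases q) (auto simp: bit_0 bit_Suc)
qed

lemma mk_lt: "mk n x < 2^n"
  using lt_pow2_bits bit_mk by auto

lemma xor_lt: "(a::nat) < 2^n \<Longrightarrow> b < 2^n \<Longrightarrow> a XOR b < 2^n"
  by (simp add: lt_pow2_bits bit_xor_iff)

lemma xor_xor_same: "((a::nat) XOR m) XOR m = a"
  by (rule bit_eqI) (auto simp: bit_xor_iff)

lemma mk_cong: "(\<And>q. q < n \<Longrightarrow> x q = y q) \<Longrightarrow> mk n x = mk n y"
  by (rule bit_eqI) (auto simp: bit_mk)

lemma mk_xor: "mk n (\<lambda>q. x q \<noteq> y q) = mk n x XOR mk n y"
  by (rule bit_eqI) (auto simp: bit_mk bit_xor_iff)

fun par :: "nat \<Rightarrow> (nat \<Rightarrow> bool) \<Rightarrow> bool" where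
  "par 0 R = False" | "par (Suc k) R = (par k R \<noteq> R k)"

definition sg :: "bool \<Rightarrow> complex" where "sg b = (if b then -1 else 1)"

lemma card_Suc_filter: "card {i. i < Suc k \<and> R i} = card {i. i < k \<and> R i} + (if R k then 1 else 0)"
proof -
  have "{i. i < Suc k \<and> R i} = {i. i < k \<and> R i} \<union> (if R k then {k} else {})"
    by (auto simp: less_Suc_eq)
  then show ?thesis by auto
qed

lemma card_par: "(-1::complex) ^ card {i. i < k \<and> R i} = sg (par k R)"
  by (induction k) (auto simp: card_Suc_filter sg_def)

lemma par_xor: "par k (\<lambda>i. P i \<noteq> Q i) = (par k P \<noteq> par k Q)"
  by (induction k) auto

lemma par_cong: "(\<And>i. i < k \<Longrightarrow> P i = Q i) \<Longrightarrow> par k P = par k Q"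
  by (induction k) auto

lemma par_False: "par k (\<lambda>i. False) = False"
  by (induction k) auto

lemma sg_xor: "sg (a \<noteq> b) = sg a * sg b"
  by (auto simp: sg_def)

lemma sg_sq: "sg a * sg a = 1" by (auto simp: sg_def)

definition ph :: "nat \<Rightarrow> pauli \<Rightarrow> complex" where
  "ph n p = \<i> ^ card {q. q < n \<and> fst p q \<and> snd p q}"

lemma ph_sq: "ph n p * ph n p = sg (par n (\<lambda>q. fst p q \<and> snd p q))"
proof -
  have "ph n p * ph n p = (\<i>^2) ^ card {q. q < n \<and> fst p q \<and> snd p q}"
    unfolding ph_def by (simp add: power_mult_distrib[symmetric] power_mult[symmetric] mult.commute)
  also have "\<dots> = sg (par n (\<lambda>q. fst p q \<and> snd p q))" using card_par by simp
  finally show ?thesis .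
qed

lemma ph_nz: "ph n p \<noteq> 0" by (simp add: ph_def)
lemma ph_norm: "cmod (ph n p) = 1" by (simp add: ph_def norm_power)

lemma pmat_entry:
  assumes "a < 2^n" "b < 2^n"
  shows "pmat n p $$ (a,b) = (if a = b XOR mk n (fst p) then ph n p * sg (par n (\<lambda>q. snd p q \<and> bit b q)) else 0)"
proof -
  have eq: "(\<forall>q<n. bit a q \<longleftrightarrow> (bit b q \<noteq> fst p q)) \<longleftrightarrow> a = b XOR mk n (fst p)"
  proof
    assume "\<forall>q<n. bit a q \<longleftrightarrow> (bit b q \<noteq> fst p q)"
    then show "a = b XOR mk n (fst p)"
      by (intro eq_by_bits[OF assms(1) xor_lt[OF assms(2) mk_lt]]) (auto simp: bit_xor_iff bit_mk)
  qed (auto simp: bit_xor_iff bit_mk)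
  show ?thesis using assms unfolding pmat_def
    by (simp only: index_mat(1) split eq card_par ph_def)
qed

lemma pmat_carrier[simp]: "pmat n p \<in> carrier_mat (2^n) (2^n)"
  by (simp add: pmat_def)
lemma pmat_dims[simp]: "dim_row (pmat n p) = 2^n" "dim_col (pmat n p) = 2^n"
  by (simp_all add: pmat_def)



lemma par_shift: "par n (\<lambda>i. z i \<and> bit (c XOR m) i) = (par n (\<lambda>i. z i \<and> bit c i) \<noteq> par n (\<lambda>i. z i \<and> bit m i))"
proof -
  have "par n (\<lambda>i. z i \<and> bit (c XOR m) i) = par n (\<lambda>i. (z i \<and> bit c i) \<noteq> (z i \<and> bit m i))"
    by (rule par_cong) (auto simp: bit_xor_iff)
  then show ?thesis by (simp only: par_xor)
qed

definition cm :: "nat \<Rightarrow> pauli \<Rightarrow> pauli \<Rightarrow> complex" where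
  "cm n p q = ph n p * ph n q * sg (par n (\<lambda>i. snd p i \<and> fst q i)) / ph n (ptimes p q)"

lemma sg_norm: "cmod (sg b) = 1" by (simp add: sg_def)
lemma sg_nz: "sg b \<noteq> 0" by (simp add: sg_def)

lemma cm_norm: "cmod (cm n p q) = 1"
  by (simp add: cm_def norm_mult norm_divide ph_norm sg_norm)

lemma pmat_mult: "pmat n p * pmat n q = cm n p q \<cdot>\<^sub>m pmat n (ptimes p q)"
proof (rule eq_matI)
  fix a c assume a: "a < dim_row (cm n p q \<cdot>\<^sub>m pmat n (ptimes p q))" and c: "c < dim_col (cm n p q \<cdot>\<^sub>m pmat n (ptimes p q))"
  then have a: "a < 2^n" and c: "c < 2^n" by auto
  define mp where "mp = mk n (fst p)"
  define mq where "mq = mk n (fst q)"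
  have cq: "c XOR mq < 2^n" unfolding mq_def by (intro xor_lt c mk_lt)
  have "(pmat n p * pmat n q) $$ (a,c) = (\<Sum>b\<in>{0..<2^n}. pmat n p $$ (a,b) * pmat n q $$ (b,c))"
    using a c by (simp add: scalar_prod_def)
  also have "\<dots> = (\<Sum>b\<in>{0..<2^n}. (if b = c XOR mq then pmat n p $$ (a,b) * (ph n q * sg (par n (\<lambda>i. snd q i \<and> bit c i))) else 0))"
  proof (rule sum.cong[OF refl])
    fix b assume "b \<in> {0..<(2::nat)^n}"
    then have b: "b < 2^n" by simp
    have "b = c XOR mq \<longleftrightarrow> c = b XOR mq" by (auto simp: xor_xor_same)
    then show "pmat n p $$ (a,b) * pmat n q $$ (b,c) = (if b = c XOR mq then pmat n p $$ (a,b) * (ph n q * sg (par n (\<lambda>i. snd q i \<and> bit c i))) else 0)"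
      by (simp add: pmat_entry[OF b c] mq_def)
  qed
  also have "\<dots> = pmat n p $$ (a, c XOR mq) * (ph n q * sg (par n (\<lambda>i. snd q i \<and> bit c i)))"
    using cq by (simp add: sum.delta)
  also have "\<dots> = (if a = c XOR mk n (fst (ptimes p q)) then
        ph n p * ph n q * sg (par n (\<lambda>i. snd p i \<and> fst q i)) * sg (par n (\<lambda>i. snd (ptimes p q) i \<and> bit c i)) else 0)"
  proof -
    have x: "(c XOR mq) XOR mk n (fst p) = c XOR mk n (fst (ptimes p q))"
      by (rule bit_eqI) (auto simp: bit_xor_iff bit_mk mq_def ptimes_def)
    have "par n (\<lambda>i. snd p i \<and> bit (c XOR mq) i) = (par n (\<lambda>i. snd p i \<and> bit c i) \<noteq> par n (\<lambda>i. snd p i \<and> fst q i))"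
      unfolding par_shift mq_def
      by (metis (no_types, lifting) bit_mk par_cong)
    then have e1: "sg (par n (\<lambda>i. snd p i \<and> bit (c XOR mq) i)) = sg (par n (\<lambda>i. snd p i \<and> bit c i)) * sg (par n (\<lambda>i. snd p i \<and> fst q i))"
      by (simp only: sg_xor)
    have "par n (\<lambda>i. snd (ptimes p q) i \<and> bit c i) = (par n (\<lambda>i. snd p i \<and> bit c i) \<noteq> par n (\<lambda>i. snd q i \<and> bit c i))"
      by (subst par_xor[symmetric], rule par_cong) (auto simp: ptimes_def)
    then have e2: "sg (par n (\<lambda>i. snd (ptimes p q) i \<and> bit c i)) = sg (par n (\<lambda>i. snd p i \<and> bit c i)) * sg (par n (\<lambda>i. snd q i \<and> bit c i))"
      by (simp only: sg_xor)
    show ?thesis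
      by (simp only: pmat_entry[OF a cq] x e1 e2) (simp add: algebra_simps)
  qed
  also have "\<dots> = (cm n p q \<cdot>\<^sub>m pmat n (ptimes p q)) $$ (a,c)"
    using a c by (simp add: pmat_entry cm_def ph_nz)
  finally show "(pmat n p * pmat n q) $$ (a,c) = (cm n p q \<cdot>\<^sub>m pmat n (ptimes p q)) $$ (a,c)" .
qed auto



lemma smult_smult_mat: "a \<cdot>\<^sub>m (b \<cdot>\<^sub>m A) = (a * b) \<cdot>\<^sub>m (A :: complex mat)"
  by (rule eq_matI) auto
lemma one_smult_m[simp]: "1 \<cdot>\<^sub>m A = (A :: complex mat)"
  by (rule eq_matI) auto

lemma ptimes_comm: "ptimes p q = ptimes q p"
  by (auto simp: ptimes_def)
lemma ptimes_self: "ptimes p p = pid"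
  by (auto simp: ptimes_def pid_def)
lemma ptimes_pid[simp]: "ptimes pid p = p" "ptimes p pid = p"
  by (auto simp: ptimes_def pid_def)
lemma ptimes_assoc: "ptimes (ptimes p q) r = ptimes p (ptimes q r)"
  by (auto simp: ptimes_def)
lemma ptimes_eq_pid: "ptimes p q = pid \<Longrightarrow> p = q"
  by (auto simp: ptimes_def pid_def prod_eq_iff fun_eq_iff)

lemma ph_pid: "ph n pid = 1" by (simp add: ph_def pid_def)

lemma mk_false: "mk n (\<lambda>_. False) = 0"
  by (rule bit_eqI) (simp add: bit_mk)

lemma pmat_pid: "pmat n pid = 1\<^sub>m (2^n)"
  by (rule eq_matI) (auto simp: pmat_entry ph_def pid_def mk_false par_False sg_def)

lemma hpmat_sg: "hpmat n (s,p) = sg s \<cdot>\<^sub>m pmat n p"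
  by (simp add: hpmat_def sg_def)
lemma hpmat_sg': "hpmat n S = sg (fst S) \<cdot>\<^sub>m pmat n (snd S)"
  by (simp add: hpmat_def sg_def)

lemma pmat_sq: "pmat n p * pmat n p = 1\<^sub>m (2^n)"
proof -
  have "cm n p p = 1"
  proof -
    have "par n (\<lambda>i. snd p i \<and> fst p i) = par n (\<lambda>q. fst p q \<and> snd p q)"
      by (rule par_cong) auto
    then show ?thesis
      unfolding cm_def ptimes_self ph_pid
      by (simp add: ph_sq[simplified mult.assoc] mult.assoc sg_sq)
  qed
  then show ?thesis by (simp add: pmat_mult ptimes_self pmat_pid)
qed

definition om :: "nat \<Rightarrow> pauli \<Rightarrow> pauli \<Rightarrow> bool" where
  "om n p q = par n (\<lambda>i. (fst p i \<and> snd q i) \<noteq> (snd p i \<and> fst q i))"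

lemma om_sym: "om n p q = om n q p"
  unfolding om_def by (rule par_cong) auto

lemma om_ptimes: "om n p (ptimes q r) = (om n p q \<noteq> om n p r)"
proof -
  have "om n p (ptimes q r) = par n (\<lambda>i. ((fst p i \<and> snd q i) \<noteq> (snd p i \<and> fst q i)) \<noteq> ((fst p i \<and> snd r i) \<noteq> (snd p i \<and> fst r i)))"
    unfolding om_def by (rule par_cong) (auto simp: ptimes_def)
  then show ?thesis unfolding om_def by (simp only: par_xor)
qed

lemma om_pid: "om n p pid = False"
  unfolding om_def pid_def by (simp add: par_False)

lemma cm_swap: "cm n p q = sg (om n p q) * cm n q p"
proof -
  have "par n (\<lambda>i. fst p i \<and> snd q i) = par n (\<lambda>i. snd q i \<and> fst p i)"
    by (rule par_cong) auto
  then have "om n p q = (par n (\<lambda>i. snd q i \<and> fst p i) \<noteq> par n (\<lambda>i. snd p i \<and> fst q i))"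
    unfolding om_def by (simp only: par_xor)
  then have "sg (om n p q) = sg (par n (\<lambda>i. snd q i \<and> fst p i)) * sg (par n (\<lambda>i. snd p i \<and> fst q i))"
    by (simp only: sg_xor)
  then show ?thesis
    unfolding cm_def by (simp add: ptimes_comm[of q p] algebra_simps sg_sq)
qed

lemma pmat_comm: "pmat n p * pmat n q = sg (om n p q) \<cdot>\<^sub>m (pmat n q * pmat n p)"
  by (simp add: pmat_mult cm_swap[of n p q] ptimes_comm[of q p] smult_smult_mat)

lemma pmat_scalar_id:
  assumes "pauli_on n r" "pmat n r = c \<cdot>\<^sub>m 1\<^sub>m (2^n)"
  shows "r = pid"
proof -
  have e: "pmat n r $$ (a,b) = (if a = b then c else 0)" if "a < 2^n" "b < 2^n" for a b
    using assms(2) that by simp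
  have x: "\<not> fst r q" if "q < n" for q
  proof
    assume xq: "fst r q"
    have b: "bit (mk n (fst r)) q" using that xq by (simp add: bit_mk)
    have m0: "mk n (fst r) \<noteq> 0"
    proof
      assume "mk n (fst r) = 0"
      then have "bit (mk n (fst r)) q = bit (0::nat) q" by simp
      then show False using b by simp
    qed
    have ml: "mk n (fst r) < 2^n" by (rule mk_lt)
    have "pmat n r $$ (mk n (fst r), 0) = 0" using e[OF ml] m0 by simp
    moreover have "pmat n r $$ (mk n (fst r), 0) = ph n r * sg (par n (\<lambda>i. snd r i \<and> bit (0::nat) i))"
      using pmat_entry[OF ml, of 0 r] by simp
    ultimately show False by (simp add: ph_nz sg_nz)
  qed
  have "mk n (fst r) = 0"
    by (rule bit_eqI) (simp add: bit_mk x)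
  then have d: "pmat n r $$ (a,a) = ph n r * sg (par n (\<lambda>i. snd r i \<and> bit a i))" if "a < 2^n" for a
    using that by (simp add: pmat_entry)
  have z: "\<not> snd r q" if "q < n" for q
  proof
    assume zq: "snd r q"
    have q2: "(2::nat)^q < 2^n" using that by simp
    have "par n (\<lambda>i. snd r i \<and> bit ((2::nat)^q) i) = par n (\<lambda>i. i = q)"
      by (rule par_cong) (auto simp: bit_exp_iff zq)
    also have "\<dots> = True"
    proof -
      have "par k (\<lambda>i. i = q) = (q < k)" for k by (induction k) auto
      then show ?thesis using that by simp
    qed
    finally have "pmat n r $$ (2^q, 2^q) = - ph n r" using d[OF q2] by (simp add: sg_def)
    moreover have "pmat n r $$ (0, 0) = ph n r" using d[of 0] by (simp add: par_False sg_def)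
    moreover have "pmat n r $$ (2^q, 2^q) = pmat n r $$ (0, 0)" using e q2 by simp
    ultimately have "- ph n r = ph n r" by simp
    then show False using ph_nz[of n r] by (simp add: neg_equal_iff_equal eq_neg_iff_add_eq_0)
  qed
  show ?thesis using x z assms(1) unfolding pauli_on_def pid_def
    by (auto simp: prod_eq_iff fun_eq_iff) (meson not_less)+
qed



lemma smult_cancel: "(k::complex) \<noteq> 0 \<Longrightarrow> k \<cdot>\<^sub>m A = B \<Longrightarrow> A = (1/k) \<cdot>\<^sub>m B"
  by (auto simp: smult_smult_mat)

lemma pauli_on_ptimes: "pauli_on n p \<Longrightarrow> pauli_on n q \<Longrightarrow> pauli_on n (ptimes p q)"
  by (auto simp: pauli_on_def ptimes_def)
lemma pauli_on_pid: "pauli_on n pid"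
  by (auto simp: pauli_on_def pid_def)

lemma cm_nz: "cm n p q \<noteq> 0"
  using cm_norm[of n p q] by auto

lemma hpmat_uniq:
  assumes "pauli_on n p" "pauli_on n p'" "sg s \<cdot>\<^sub>m pmat n p = sg s' \<cdot>\<^sub>m pmat n p'"
  shows "p = p'"
proof -
  have "(sg s \<cdot>\<^sub>m pmat n p) * pmat n p' = (sg s' \<cdot>\<^sub>m pmat n p') * pmat n p'"
    using assms(3) by simp
  moreover have "(sg s \<cdot>\<^sub>m pmat n p) * pmat n p' = (sg s * cm n p p') \<cdot>\<^sub>m pmat n (ptimes p p')"
    by (simp add: mult_smult_assoc_mat[OF pmat_carrier pmat_carrier] pmat_mult smult_smult_mat)
  moreover have "(sg s' \<cdot>\<^sub>m pmat n p') * pmat n p' = sg s' \<cdot>\<^sub>m 1\<^sub>m (2^n)"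
    by (simp add: mult_smult_assoc_mat[OF pmat_carrier pmat_carrier] pmat_sq)
  ultimately have "(sg s * cm n p p') \<cdot>\<^sub>m pmat n (ptimes p p') = sg s' \<cdot>\<^sub>m 1\<^sub>m (2^n)"
    by simp
  then have "pmat n (ptimes p p') = (1 / (sg s * cm n p p')) \<cdot>\<^sub>m (sg s' \<cdot>\<^sub>m 1\<^sub>m (2^n))"
    by (intro smult_cancel) (auto simp: sg_nz cm_nz)
  then have "pmat n (ptimes p p') = (1 / (sg s * cm n p p') * sg s') \<cdot>\<^sub>m 1\<^sub>m (2^n)"
    by (simp add: smult_smult_mat)
  then have "ptimes p p' = pid"
    by (rule pmat_scalar_id[OF pauli_on_ptimes[OF assms(1,2)]])
  then show ?thesis by (rule ptimes_eq_pid)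
qed

lemma sq_norm_smult: "sq_norm (c \<cdot>\<^sub>v v) = (cmod c)^2 * sq_norm v"
  by (simp add: sq_norm_def norm_mult power_mult_distrib sum_distrib_left)

lemma sq_norm_pmat:
  assumes v: "v \<in> carrier_vec (2^n)"
  shows "sq_norm (pmat n p *\<^sub>v v) = sq_norm v"
proof -
  define m where "m = mk n (fst p)"
  have ml: "m < 2^n" unfolding m_def by (rule mk_lt)
  have ent: "(pmat n p *\<^sub>v v) $ a = ph n p * sg (par n (\<lambda>q. snd p q \<and> bit (a XOR m) q)) * v $ (a XOR m)"
    if a: "a < 2^n" for a
  proof -
    have am: "a XOR m < 2^n" by (rule xor_lt[OF a ml])
    have "(pmat n p *\<^sub>v v) $ a = (\<Sum>b\<in>{0..<2^n}. pmat n p $$ (a,b) * v $ b)"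
      using a v by (simp add: scalar_prod_def)
    also have "\<dots> = (\<Sum>b\<in>{0..<2^n}. if b = a XOR m then ph n p * sg (par n (\<lambda>q. snd p q \<and> bit b q)) * v $ b else 0)"
    proof (rule sum.cong[OF refl])
      fix b assume "b \<in> {0..<(2::nat)^n}"
      then have b: "b < 2^n" by simp
      have "a = b XOR m \<longleftrightarrow> b = a XOR m" by (auto simp: xor_xor_same)
      then show "pmat n p $$ (a,b) * v $ b = (if b = a XOR m then ph n p * sg (par n (\<lambda>q. snd p q \<and> bit b q)) * v $ b else 0)"
        by (simp add: pmat_entry[OF a b] m_def)
    qed
    also have "\<dots> = ph n p * sg (par n (\<lambda>q. snd p q \<and> bit (a XOR m) q)) * v $ (a XOR m)"
      using am by (simp add: sum.delta)
    finally show ?thesis .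
  qed
  have "sq_norm (pmat n p *\<^sub>v v) = (\<Sum>a<2^n. (cmod (v $ (a XOR m)))^2)"
    unfolding sq_norm_def
  proof (rule sum.cong)
    show "{..<dim_vec (pmat n p *\<^sub>v v)} = {..<2^n}" by simp
  next
    fix a assume "a \<in> {..<(2::nat)^n}"
    then have a: "a < 2^n" by simp
    show "(cmod ((pmat n p *\<^sub>v v) $ a))^2 = (cmod (v $ (a XOR m)))^2"
      by (simp only: ent[OF a] norm_mult ph_norm sg_norm) simp
  qed
  also have "\<dots> = (\<Sum>a<2^n. (cmod (v $ a))^2)"
    by (rule sum.reindex_bij_witness[where i="\<lambda>a. a XOR m" and j="\<lambda>a. a XOR m"])
       (auto simp: xor_xor_same intro: xor_lt ml)
  also have "\<dots> = sq_norm v" using v by (simp add: sq_norm_def)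
  finally show ?thesis .
qed


lemma adj_dims: "dim_row (adj U) = dim_col U" "dim_col (adj U) = dim_row U"
  unfolding adj_def by (rule dim_row_mat, rule dim_col_mat)
lemma adj_carrier[simp]: "U \<in> carrier_mat N N \<Longrightarrow> adj U \<in> carrier_mat N N"
  unfolding carrier_mat_def by (simp only: mem_Collect_eq adj_dims)

lemma clif_unit0:
  assumes "is_clifford n U"
  shows "U \<in> carrier_mat (2^n) (2^n) \<and> adj U * U = 1\<^sub>m (2^n) \<and> U * adj U = 1\<^sub>m (2^n)"
  using assms unfolding is_clifford_def by (elim conjE) (intro conjI)

lemma clif_unit:
  assumes "is_clifford n U"
  shows "U \<in> carrier_mat (2^n) (2^n)" "adj U \<in> carrier_mat (2^n) (2^n)"
    "adj U * U = 1\<^sub>m (2^n)" "U * adj U = 1\<^sub>m (2^n)"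
  using clif_unit0[OF assms] by auto

lemma sg_sq'[simp]: "sg a * sg a = 1" by (simp add: sg_def)
lemma sg_sq''[simp]: "sg a * (sg a * x) = x" by (simp add: sg_def)

lemma conj_back:
  fixes V W P Q :: "complex mat"
  assumes V: "V \<in> carrier_mat N N" and W: "W \<in> carrier_mat N N" and VW: "W * V = 1\<^sub>m N"
    and P: "P \<in> carrier_mat N N" and Q: "Q \<in> carrier_mat N N"
    and e: "V * P * W = c \<cdot>\<^sub>m Q"
  shows "P = c \<cdot>\<^sub>m (W * Q * V)"
proof -
  have "W * (V * P * W) * V = (W * V) * P * (W * V)"
    using V W P by (simp add: assoc_mult_mat[of _ N N _ N _ N])
  also have "\<dots> = P" using VW P by (simp add: left_mult_one_mat right_mult_one_mat)
  finally have "P = W * (c \<cdot>\<^sub>m Q) * V" using e by simp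
  also have "\<dots> = c \<cdot>\<^sub>m (W * Q * V)"
    using V W Q by (simp add: mult_smult_distrib[of _ N N] mult_smult_assoc_mat[of _ N N])
  finally show ?thesis .
qed

lemma conj_split:
  fixes V W A B :: "complex mat"
  assumes V: "V \<in> carrier_mat N N" and W: "W \<in> carrier_mat N N" and VW: "V * W = 1\<^sub>m N"
    and A: "A \<in> carrier_mat N N" and B: "B \<in> carrier_mat N N"
  shows "W * (A * B) * V = (W * A * V) * (W * B * V)"
proof -
  have "(W * A * V) * (W * B * V) = W * A * (V * W) * B * V"
    using V W A B by (simp add: assoc_mult_mat[of _ N N _ N _ N])
  also have "\<dots> = W * A * B * V"
    using VW right_mult_one_mat[OF mult_carrier_mat[OF W A]] by (simp only:)
  also have "\<dots> = W * (A * B) * V"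
    by (simp only: assoc_mult_mat[OF W A B])
  finally show ?thesis by simp
qed

lemma smult_mult_smult:
  fixes A B :: "complex mat"
  assumes "A \<in> carrier_mat n1 n2" "B \<in> carrier_mat n2 n3"
  shows "(a \<cdot>\<^sub>m A) * (b \<cdot>\<^sub>m B) = (a * b) \<cdot>\<^sub>m (A * B)"
proof -
  have "(a \<cdot>\<^sub>m A) * (b \<cdot>\<^sub>m B) = a \<cdot>\<^sub>m (A * (b \<cdot>\<^sub>m B))"
    by (rule mult_smult_assoc_mat[OF assms(1) smult_carrier_mat[OF assms(2)]])
  also have "A * (b \<cdot>\<^sub>m B) = b \<cdot>\<^sub>m (A * B)" by (rule mult_smult_distrib[OF assms])
  finally show ?thesis by (simp add: smult_smult_mat)
qed

definition fwd :: "nat \<Rightarrow> complex mat \<Rightarrow> pauli \<Rightarrow> pauli" where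
  "fwd n U p = snd (SOME S. pauli_on n (snd S) \<and> U * pmat n p * adj U = hpmat n S)"

lemma fwd_spec:
  assumes "is_clifford n U" "pauli_on n p"
  shows "pauli_on n (fwd n U p) \<and> (\<exists>s. U * pmat n p * adj U = sg s \<cdot>\<^sub>m pmat n (fwd n U p))"
proof -
  have "\<exists>S. pauli_on n (snd S) \<and> U * pmat n p * adj U = hpmat n S"
    using assms unfolding is_clifford_def by blast
  then have "pauli_on n (snd (SOME S. pauli_on n (snd S) \<and> U * pmat n p * adj U = hpmat n S)) \<and>
     U * pmat n p * adj U = hpmat n (SOME S. pauli_on n (snd S) \<and> U * pmat n p * adj U = hpmat n S)"
    by (rule someI_ex)
  then show ?thesis unfolding fwd_def hpmat_sg' by blast
qed

lemma fwd_uniq: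
  assumes "is_clifford n U" "pauli_on n p" "pauli_on n q" "U * pmat n p * adj U = sg s \<cdot>\<^sub>m pmat n q"
  shows "fwd n U p = q"
proof -
  obtain s' where "U * pmat n p * adj U = sg s' \<cdot>\<^sub>m pmat n (fwd n U p)" and f: "pauli_on n (fwd n U p)"
    using fwd_spec[OF assms(1,2)] by blast
  then have "sg s' \<cdot>\<^sub>m pmat n (fwd n U p) = sg s \<cdot>\<^sub>m pmat n q" using assms(4) by simp
  then show ?thesis by (rule hpmat_uniq[OF f assms(3)])
qed

lemma finite_PS: "finite {p. pauli_on n p}"
proof (rule finite_imageD)
  let ?f = "\<lambda>p::pauli. ({i. fst p i}, {i. snd p i})"
  show "inj_on ?f {p. pauli_on n p}"
    by (rule inj_onI) (auto simp: prod_eq_iff fun_eq_iff)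
  have "?f ` {p. pauli_on n p} \<subseteq> Pow {..<n} \<times> Pow {..<n}"
    by (auto simp: pauli_on_def) (meson not_less)+
  then show "finite (?f ` {p. pauli_on n p})" by (rule finite_subset) auto
qed

lemma fwd_back:
  assumes "is_clifford n U" "U * pmat n p * adj U = c \<cdot>\<^sub>m pmat n q"
  shows "pmat n p = c \<cdot>\<^sub>m (adj U * pmat n q * U)"
  using conj_back[of U "2^n" "adj U" "pmat n p" "pmat n q" c] clif_unit[OF assms(1)] assms(2) by simp

lemma fwd_inj: assumes "is_clifford n U" shows "inj_on (fwd n U) {p. pauli_on n p}"
proof
  fix p p' assume p: "p \<in> {p. pauli_on n p}" and p': "p' \<in> {p. pauli_on n p}" and eq: "fwd n U p = fwd n U p'"
  obtain s where s: "U * pmat n p * adj U = sg s \<cdot>\<^sub>m pmat n (fwd n U p)"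
    using fwd_spec[OF assms] p by blast
  obtain s' where s'0: "U * pmat n p' * adj U = sg s' \<cdot>\<^sub>m pmat n (fwd n U p')"
    using fwd_spec[OF assms, of p'] p' by auto
  then have s': "U * pmat n p' * adj U = sg s' \<cdot>\<^sub>m pmat n (fwd n U p)" using eq by simp
  have "pmat n p = sg s \<cdot>\<^sub>m (adj U * pmat n (fwd n U p) * U)" by (rule fwd_back[OF assms s])
  moreover have "pmat n p' = sg s' \<cdot>\<^sub>m (adj U * pmat n (fwd n U p) * U)" by (rule fwd_back[OF assms s'])
  ultimately have "sg s \<cdot>\<^sub>m pmat n p = sg s' \<cdot>\<^sub>m pmat n p'"
    by (simp add: smult_smult_mat)
  then show "p = p'" using hpmat_uniq p p' by blast
qed

lemma conj_ex:
  assumes "is_clifford n U" "pauli_on n q"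
  shows "\<exists>p s. pauli_on n p \<and> adj U * pmat n q * U = sg s \<cdot>\<^sub>m pmat n p"
proof -
  have "fwd n U ` {p. pauli_on n p} \<subseteq> {p. pauli_on n p}"
    using fwd_spec[OF assms(1)] by auto
  then have "fwd n U ` {p. pauli_on n p} = {p. pauli_on n p}"
    by (rule endo_inj_surj[OF finite_PS _ fwd_inj[OF assms(1)]])
  then have "q \<in> fwd n U ` {p. pauli_on n p}" using assms(2) by simp
  then obtain p where p: "pauli_on n p" "q = fwd n U p" by blast
  then obtain s where "U * pmat n p * adj U = sg s \<cdot>\<^sub>m pmat n q"
    using fwd_spec[OF assms(1) p(1)] by blast
  then have "pmat n p = sg s \<cdot>\<^sub>m (adj U * pmat n q * U)" by (rule fwd_back[OF assms(1)])
  then have "adj U * pmat n q * U = sg s \<cdot>\<^sub>m pmat n p"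
    by (simp add: smult_smult_mat)
  then show ?thesis using p by blast
qed

lemma conjP_spec:
  assumes "is_clifford n U" "pauli_on n q"
  shows "pauli_on n (conjP n U q) \<and> (\<exists>s. adj U * pmat n q * U = sg s \<cdot>\<^sub>m pmat n (conjP n U q))"
proof -
  obtain p s where ps: "pauli_on n p" "adj U * pmat n q * U = sg s \<cdot>\<^sub>m pmat n p"
    using conj_ex[OF assms] by blast
  have "pauli_on n (conjP n U q) \<and> (\<exists>s. adj U * pmat n q * U = hpmat n (s, conjP n U q))"
    unfolding conjP_def
  proof (rule theI[of _ p])
    show "pauli_on n p \<and> (\<exists>s. adj U * pmat n q * U = hpmat n (s, p))"
      using ps by (auto simp: hpmat_sg)
  next
    fix x assume "pauli_on n x \<and> (\<exists>s. adj U * pmat n q * U = hpmat n (s, x))"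
    then obtain s' where x: "pauli_on n x" "adj U * pmat n q * U = sg s' \<cdot>\<^sub>m pmat n x"
      by (auto simp: hpmat_sg)
    then have "sg s' \<cdot>\<^sub>m pmat n x = sg s \<cdot>\<^sub>m pmat n p" using ps by simp
    then show "x = p" by (rule hpmat_uniq[OF x(1) ps(1)])
  qed
  then show ?thesis by (simp add: hpmat_sg)
qed

lemma conjP_uniq:
  assumes "is_clifford n U" "pauli_on n q" "pauli_on n p" "adj U * pmat n q * U = sg s \<cdot>\<^sub>m pmat n p"
  shows "conjP n U q = p"
proof -
  obtain s' where x: "pauli_on n (conjP n U q)" "adj U * pmat n q * U = sg s' \<cdot>\<^sub>m pmat n (conjP n U q)"
    using conjP_spec[OF assms(1,2)] by blast
  then have "sg s' \<cdot>\<^sub>m pmat n (conjP n U q) = sg s \<cdot>\<^sub>m pmat n p" using assms(4) by simp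
  then show ?thesis by (rule hpmat_uniq[OF x(1) assms(3)])
qed

lemma sg_cancel_pp:
  assumes "sg a \<cdot>\<^sub>m (pmat n q * pmat n p) = sg b \<cdot>\<^sub>m (pmat n q * pmat n p)"
  shows "a = b"
proof -
  have k: "pmat n q * (c \<cdot>\<^sub>m (pmat n q * pmat n p)) * pmat n p = c \<cdot>\<^sub>m 1\<^sub>m (2^n)" for c
  proof -
    have c1: "pmat n q * pmat n p \<in> carrier_mat (2^n) (2^n)" by (simp add: mult_carrier_mat[OF pmat_carrier pmat_carrier])
    have c2: "pmat n q * (pmat n q * pmat n p) \<in> carrier_mat (2^n) (2^n)" by (simp add: mult_carrier_mat[OF pmat_carrier c1])
    have "pmat n q * (c \<cdot>\<^sub>m (pmat n q * pmat n p)) * pmat n p = c \<cdot>\<^sub>m (pmat n q * (pmat n q * pmat n p) * pmat n p)"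
      by (simp add: mult_smult_distrib[OF pmat_carrier c1] mult_smult_assoc_mat[OF c2 pmat_carrier])
    also have "pmat n q * (pmat n q * pmat n p) * pmat n p = (pmat n q * pmat n q) * (pmat n p * pmat n p)"
    proof -
      have c3: "pmat n p * pmat n p \<in> carrier_mat (2^n) (2^n)" by (simp add: mult_carrier_mat[OF pmat_carrier pmat_carrier])
      have "pmat n q * (pmat n q * pmat n p) * pmat n p = pmat n q * ((pmat n q * pmat n p) * pmat n p)"
        by (rule assoc_mult_mat[OF pmat_carrier c1 pmat_carrier])
      also have "(pmat n q * pmat n p) * pmat n p = pmat n q * (pmat n p * pmat n p)"
        by (rule assoc_mult_mat[OF pmat_carrier pmat_carrier pmat_carrier])
      also have "pmat n q * (pmat n q * (pmat n p * pmat n p)) = (pmat n q * pmat n q) * (pmat n p * pmat n p)"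
        by (rule assoc_mult_mat[OF pmat_carrier pmat_carrier c3, symmetric])
      finally show ?thesis .
    qed
    finally show ?thesis by (simp add: pmat_sq)
  qed
  have "sg a \<cdot>\<^sub>m 1\<^sub>m (2^n) = sg b \<cdot>\<^sub>m 1\<^sub>m (2^n)"
    using k[of "sg a"] k[of "sg b"] assms by simp
  then have "(sg a \<cdot>\<^sub>m 1\<^sub>m (2^n)) $$ (0,0) = (sg b \<cdot>\<^sub>m 1\<^sub>m (2^n) :: complex mat) $$ (0,0)" by simp
  then show ?thesis by (auto simp: sg_def split: if_splits)
qed

lemma om_fwd_conj:
  assumes U: "is_clifford n U" and p: "pauli_on n p" and q: "pauli_on n q"
  shows "om n (fwd n U p) q = om n p (conjP n U q)"
proof -
  define p' where "p' = fwd n U p"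
  define q'' where "q'' = conjP n U q"
  obtain a where ha: "U * pmat n p * adj U = sg a \<cdot>\<^sub>m pmat n p'"
    using fwd_spec[OF U p] p'_def by blast
  obtain b where hb: "adj U * pmat n q * U = sg b \<cdot>\<^sub>m pmat n q''"
    using conjP_spec[OF U q] q''_def by blast
  have ha': "adj U * pmat n p' * U = sg a \<cdot>\<^sub>m pmat n p"
    using fwd_back[OF U ha] by (simp add: smult_smult_mat)
  note cu = clif_unit[OF U]
  have sp: "adj U * (A * B) * U = (adj U * A * U) * (adj U * B * U)"
    if "A \<in> carrier_mat (2^n) (2^n)" "B \<in> carrier_mat (2^n) (2^n)" for A B
    using conj_split[OF cu(1) cu(2) cu(4) that] .
  have sm: "adj U * (c \<cdot>\<^sub>m A) * U = c \<cdot>\<^sub>m (adj U * A * U)" if "A \<in> carrier_mat (2^n) (2^n)" for A c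
  proof -
    have aa: "adj U * A \<in> carrier_mat (2^n) (2^n)" using mult_carrier_mat[OF cu(2) that] .
    have "adj U * (c \<cdot>\<^sub>m A) = c \<cdot>\<^sub>m (adj U * A)" by (rule mult_smult_distrib[OF cu(2) that])
    then show ?thesis
      by (simp add: mult_smult_assoc_mat[OF aa cu(1)])
  qed
  have "adj U * (pmat n p' * pmat n q) * U = (sg a * sg b) \<cdot>\<^sub>m (pmat n p * pmat n q'')"
    using sp[of "pmat n p'" "pmat n q"] ha' hb
    by (simp add: smult_mult_smult[OF pmat_carrier pmat_carrier])
  moreover have "adj U * (pmat n p' * pmat n q) * U = (sg (om n p' q) * sg a * sg b) \<cdot>\<^sub>m (pmat n q'' * pmat n p)"
    unfolding pmat_comm[of n p' q]
    using sm[of "pmat n q * pmat n p'" "sg (om n p' q)"] sp[of "pmat n q" "pmat n p'"] ha' hb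
    by (simp add: mult_carrier_mat[OF pmat_carrier pmat_carrier] smult_mult_smult[OF pmat_carrier pmat_carrier] smult_smult_mat mult_ac)
  ultimately have "(sg a * sg b) \<cdot>\<^sub>m (pmat n p * pmat n q'') = (sg (om n p' q) * sg a * sg b) \<cdot>\<^sub>m (pmat n q'' * pmat n p)"
    by simp
  then have "(sg a * sg b) \<cdot>\<^sub>m ((sg a * sg b) \<cdot>\<^sub>m (pmat n p * pmat n q'')) = (sg a * sg b) \<cdot>\<^sub>m ((sg (om n p' q) * sg a * sg b) \<cdot>\<^sub>m (pmat n q'' * pmat n p))"
    by simp
  then have "pmat n p * pmat n q'' = sg (om n p' q) \<cdot>\<^sub>m (pmat n q'' * pmat n p)"
    by (simp add: smult_smult_mat mult_ac)
  moreover have "pmat n p * pmat n q'' = sg (om n p q'') \<cdot>\<^sub>m (pmat n q'' * pmat n p)"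
    by (rule pmat_comm)
  ultimately have "sg (om n p' q) \<cdot>\<^sub>m (pmat n q'' * pmat n p) = sg (om n p q'') \<cdot>\<^sub>m (pmat n q'' * pmat n p)"
    by metis
  then have "om n p' q = om n p q''" by (rule sg_cancel_pp)
  then show ?thesis by (simp only: p'_def q''_def)
qed


lemma mult_carrier_sq[simp]: "A \<in> carrier_mat N N \<Longrightarrow> B \<in> carrier_mat N N \<Longrightarrow> A * B \<in> carrier_mat N N"
  by (rule mult_carrier_mat)

lemma mult_smult_sq[simp]:
  fixes A B :: "complex mat"
  shows "A \<in> carrier_mat N N \<Longrightarrow> B \<in> carrier_mat N N \<Longrightarrow> A * (k \<cdot>\<^sub>m B) = k \<cdot>\<^sub>m (A * B)"
    "A \<in> carrier_mat N N \<Longrightarrow> B \<in> carrier_mat N N \<Longrightarrow> (k \<cdot>\<^sub>m A) * B = k \<cdot>\<^sub>m (A * B)"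
  by (rule mult_smult_distrib, assumption+) (rule mult_smult_assoc_mat, assumption+)

lemma sg_mult: "sg a * sg b = sg (a \<noteq> b)" by (simp add: sg_def)

lemma adj_index: "i < dim_col A \<Longrightarrow> j < dim_row A \<Longrightarrow> adj A $$ (i,j) = cnj (A $$ (j,i))"
  unfolding adj_def by (simp only: index_mat split)

lemma adj_one: "adj (1\<^sub>m N) = (1\<^sub>m N :: complex mat)"
  by (rule eq_matI) (simp_all add: adj_index adj_dims)

lemma adj_mult:
  assumes A: "A \<in> carrier_mat N N" and B: "B \<in> carrier_mat N N"
  shows "adj (A * B) = adj B * adj A"
proof (rule eq_matI)
  fix i j assume "i < dim_row (adj B * adj A)" "j < dim_col (adj B * adj A)"
  then have i: "i < N" and j: "j < N" using A B by (auto simp: adj_dims)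
  have "adj (A * B) $$ (i,j) = cnj (\<Sum>k\<in>{0..<N}. A $$ (j,k) * B $$ (k,i))"
    using A B i j by (simp add: adj_index scalar_prod_def)
  also have "\<dots> = (\<Sum>k\<in>{0..<N}. adj B $$ (i,k) * adj A $$ (k,j))"
    using A B i j by (simp add: adj_index cnj_sum mult.commute)
  also have "\<dots> = (adj B * adj A) $$ (i,j)"
    using A B i j by (simp add: scalar_prod_def adj_dims)
  finally show "adj (A * B) $$ (i,j) = (adj B * adj A) $$ (i,j)" .
qed (use A B in \<open>auto simp: adj_dims\<close>)

lemma clif_cancel:
  assumes "is_clifford n U" "X \<in> carrier_mat (2^n) m"
  shows "adj U * (U * X) = X" "U * (adj U * X) = X"
proof -
  note cu = clif_unit[OF assms(1)]
  have "adj U * (U * X) = (adj U * U) * X" by (rule assoc_mult_mat[symmetric, OF cu(2) cu(1) assms(2)])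
  then show "adj U * (U * X) = X" using cu assms(2) by (simp only: cu(3) left_mult_one_mat)
  have "U * (adj U * X) = (U * adj U) * X" by (rule assoc_mult_mat[symmetric, OF cu(1) cu(2) assms(2)])
  then show "U * (adj U * X) = X" using cu assms(2) by (simp only: cu(4) left_mult_one_mat)
qed

lemma clif_one: "is_clifford n (1\<^sub>m (2^n))"
proof -
  have "\<exists>S. pauli_on n (snd S) \<and> 1\<^sub>m (2^n) * pmat n p * adj (1\<^sub>m (2^n)) = hpmat n S" if "pauli_on n p" for p
    using that by (intro exI[of _ "(False,p)"]) (simp add: hpmat_sg sg_def adj_one)
  then show ?thesis unfolding is_clifford_def adj_one by simp
qed

lemma clif_mult:
  assumes U: "is_clifford n U" and V: "is_clifford n V"
  shows "is_clifford n (U * V)"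
proof -
  note cu = clif_unit[OF U] and cv = clif_unit[OF V]
  have ad: "adj (U * V) = adj V * adj U" by (rule adj_mult[OF cu(1) cv(1)])
  have c: "U * V \<in> carrier_mat (2^n) (2^n)" using cu cv by simp
  have u1: "adj (U * V) * (U * V) = 1\<^sub>m (2^n)"
  proof -
    have "adj V * adj U * (U * V) = adj V * (adj U * (U * V))"
      using cu cv by (simp add: assoc_mult_mat[of _ "2^n" "2^n" _ "2^n" _ "2^n"])
    then show ?thesis using cu cv ad by (simp add: clif_cancel[OF U])
  qed
  have u2: "(U * V) * adj (U * V) = 1\<^sub>m (2^n)"
  proof -
    have "U * V * (adj V * adj U) = U * (V * (adj V * adj U))"
      using cu cv by (simp add: assoc_mult_mat[of _ "2^n" "2^n" _ "2^n" _ "2^n"])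
    then show ?thesis using cu cv ad by (simp add: clif_cancel[OF V])
  qed
  have "\<exists>S. pauli_on n (snd S) \<and> U * V * pmat n p * adj (U * V) = hpmat n S" if p: "pauli_on n p" for p
  proof -
    obtain s1 where s1: "V * pmat n p * adj V = sg s1 \<cdot>\<^sub>m pmat n (fwd n V p)" and p1: "pauli_on n (fwd n V p)"
      using fwd_spec[OF V p] by blast
    obtain s2 where s2: "U * pmat n (fwd n V p) * adj U = sg s2 \<cdot>\<^sub>m pmat n (fwd n U (fwd n V p))"
      and p2: "pauli_on n (fwd n U (fwd n V p))"
      using fwd_spec[OF U p1] by blast
    have "U * V * pmat n p * adj (U * V) = U * (V * pmat n p * adj V) * adj U"
      using cu cv ad by (simp add: assoc_mult_mat[of _ "2^n" "2^n" _ "2^n" _ "2^n"])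
    also have "\<dots> = sg s1 \<cdot>\<^sub>m (U * pmat n (fwd n V p) * adj U)"
      using cu by (simp add: s1 mult_smult_sq[where N="2^n"])
    also have "\<dots> = hpmat n (s1 \<noteq> s2, fwd n U (fwd n V p))"
      by (simp add: s2 hpmat_sg smult_smult_mat sg_mult)
    finally have "U * V * pmat n p * adj (U * V) = hpmat n (s1 \<noteq> s2, fwd n U (fwd n V p))" .
    then show ?thesis using p2 by (intro exI[of _ "(s1 \<noteq> s2, fwd n U (fwd n V p))"]) simp
  qed
  then show ?thesis using c u1 u2 unfolding is_clifford_def by blast
qed

lemma fwd_mult:
  assumes U: "is_clifford n U" and V: "is_clifford n V" and p: "pauli_on n p"
  shows "fwd n (U * V) p = fwd n U (fwd n V p)"
proof -
  note cu = clif_unit[OF U] and cv = clif_unit[OF V]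
  have ad: "adj (U * V) = adj V * adj U" by (rule adj_mult[OF cu(1) cv(1)])
  obtain s1 where s1: "V * pmat n p * adj V = sg s1 \<cdot>\<^sub>m pmat n (fwd n V p)" and p1: "pauli_on n (fwd n V p)"
    using fwd_spec[OF V p] by blast
  obtain s2 where s2: "U * pmat n (fwd n V p) * adj U = sg s2 \<cdot>\<^sub>m pmat n (fwd n U (fwd n V p))"
    and p2: "pauli_on n (fwd n U (fwd n V p))"
    using fwd_spec[OF U p1] by blast
  have "U * V * pmat n p * adj (U * V) = U * (V * pmat n p * adj V) * adj U"
    using cu cv ad by (simp add: assoc_mult_mat[of _ "2^n" "2^n" _ "2^n" _ "2^n"])
  also have "\<dots> = sg s1 \<cdot>\<^sub>m (U * pmat n (fwd n V p) * adj U)"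
    using cu by (simp add: s1 mult_smult_sq[where N="2^n"])
  also have "\<dots> = sg (s1 \<noteq> s2) \<cdot>\<^sub>m pmat n (fwd n U (fwd n V p))"
    by (simp add: s2 smult_smult_mat sg_mult)
  finally show ?thesis by (rule fwd_uniq[OF clif_mult[OF U V] p p2])
qed

lemma fwd_one: "pauli_on n p \<Longrightarrow> fwd n (1\<^sub>m (2^n)) p = p"
  using fwd_uniq[OF clif_one, where s=False and q=p and p=p] by (simp add: adj_one sg_def)

lemma U_pmat:
  assumes U: "is_clifford n U" and p: "pauli_on n p"
  shows "\<exists>s. U * pmat n p = sg s \<cdot>\<^sub>m (pmat n (fwd n U p) * U)"
proof -
  note cu = clif_unit[OF U]
  obtain s where s: "U * pmat n p * adj U = sg s \<cdot>\<^sub>m pmat n (fwd n U p)"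
    using fwd_spec[OF U p] by blast
  have "U * pmat n p = U * pmat n p * (adj U * U)"
    by (simp only: cu(3) right_mult_one_mat[OF mult_carrier_mat[OF cu(1) pmat_carrier]])
  also have "\<dots> = (U * pmat n p * adj U) * U"
    using cu by (simp add: assoc_mult_mat[of _ "2^n" "2^n" _ "2^n" _ "2^n"])
  also have "\<dots> = sg s \<cdot>\<^sub>m (pmat n (fwd n U p) * U)"
    using cu by (simp add: s mult_smult_assoc_mat[of _ "2^n" "2^n"])
  finally show ?thesis by blast
qed

lemma conjP_pid: assumes U: "is_clifford n U" shows "conjP n U pid = pid"
proof -
  note cu = clif_unit[OF U]
  have "adj U * pmat n pid * U = sg False \<cdot>\<^sub>m pmat n pid"
    using cu by (simp add: pmat_pid sg_def right_mult_one_mat[OF cu(2)])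
  then show ?thesis by (rule conjP_uniq[OF U pauli_on_pid pauli_on_pid])
qed

lemma conjP_eq_pid:
  assumes U: "is_clifford n U" and q: "pauli_on n q" and e: "conjP n U q = pid"
  shows "q = pid"
proof -
  note cu = clif_unit[OF U]
  obtain s where s: "adj U * pmat n q * U = sg s \<cdot>\<^sub>m pmat n (conjP n U q)"
    using conjP_spec[OF U q] by blast
  then have "adj U * pmat n q * U = sg s \<cdot>\<^sub>m 1\<^sub>m (2^n)" using e by (simp add: pmat_pid)
  then have "pmat n q = sg s \<cdot>\<^sub>m (U * 1\<^sub>m (2^n) * adj U)"
    by (rule conj_back[OF cu(2) cu(1) cu(4) pmat_carrier one_carrier_mat])
  then have "pmat n q = sg s \<cdot>\<^sub>m 1\<^sub>m (2^n)" using cu by simp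
  then show ?thesis by (rule pmat_scalar_id[OF q])
qed

lemma clif_foldl:
  assumes "is_clifford n A" "\<forall>U\<in>set Us. is_clifford n U"
  shows "is_clifford n (foldl (\<lambda>acc U. U * acc) A Us)"
  using assms by (induction Us arbitrary: A) (auto intro: clif_mult)

lemma fwd_foldl:
  assumes "is_clifford n A" "\<forall>U\<in>set Us. is_clifford n U" "pauli_on n p"
  shows "fwd n (foldl (\<lambda>acc U. U * acc) A Us) p = foldl (\<lambda>p U. fwd n U p) (fwd n A p) Us"
  using assms
proof (induction Us arbitrary: A)
  case Nil then show ?case by simp
next
  case (Cons U Us)
  have "fwd n (U * A) p = fwd n U (fwd n A p)"
    using Cons.prems by (intro fwd_mult) auto
  then show ?case using Cons.prems by (simp add: Cons.IH clif_mult)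
qed


fun flips :: "nat \<Rightarrow> op list \<Rightarrow> pauli \<Rightarrow> bool list" where
  "flips n [] p = []"
| "flips n (Gate U l # C) p = flips n C (fwd n U p)"
| "flips n (Meas S l # C) p = om n p (snd S) # flips n C p"

lemma meas_simps[simp]:
  "meas [] = []" "meas (Gate U l # C) = meas C" "meas (Meas S l # C) = (S,l) # meas C"
  by (simp_all add: meas_def)

lemma length_flips[simp]: "length (flips n C p) = length (meas C)"
  by (induction n C p rule: flips.induct) auto

lemma proj_carrier[simp]: "proj n S b \<in> carrier_mat (2^n) (2^n)"
  by (simp add: proj_def hpmat_def)

lemma hpmat_carrier[simp]: "hpmat n S \<in> carrier_mat (2^n) (2^n)"
  by (simp add: hpmat_def)

lemma exec_carrier:
  "\<forall>g\<in>set C. op_ok n g \<Longrightarrow> v \<in> carrier_vec (2^n) \<Longrightarrow> exec n C os v \<in> carrier_vec (2^n)"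
proof (induction C arbitrary: os v)
  case Nil then show ?case by simp
next
  case (Cons g C)
  show ?case
  proof (cases g)
    case (Gate U l)
    then have "U \<in> carrier_mat (2^n) (2^n)" using Cons.prems by (auto simp: is_clifford_def)
    then show ?thesis using Gate Cons by simp
  next
    case (Meas S l)
    show ?thesis
    proof (cases os)
      case Nil then show ?thesis using Meas Cons by simp
    next
      case (Cons b os')
      have "proj n S b *\<^sub>v v \<in> carrier_vec (2^n)" by (rule mult_mat_vec_carrier[OF proj_carrier Cons.prems(2)])
      then show ?thesis using Meas Cons Cons.IH Cons.prems by simp
    qed
  qed
qed

lemma exec_smult:
  "\<forall>g\<in>set C. op_ok n g \<Longrightarrow> v \<in> carrier_vec (2^n) \<Longrightarrow> exec n C os (c \<cdot>\<^sub>v v) = c \<cdot>\<^sub>v exec n C os v"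
proof (induction C arbitrary: os v)
  case Nil then show ?case by simp
next
  case (Cons g C)
  show ?case
  proof (cases g)
    case (Gate U l)
    then have U: "U \<in> carrier_mat (2^n) (2^n)" using Cons.prems by (auto simp: is_clifford_def)
    then show ?thesis using Gate Cons by (simp add: mult_mat_vec[OF U])
  next
    case (Meas S l)
    show ?thesis
    proof (cases os)
      case Nil then show ?thesis using Meas Cons by simp
    next
      case (Cons b os')
      have "proj n S b *\<^sub>v v \<in> carrier_vec (2^n)" by (rule mult_mat_vec_carrier[OF proj_carrier Cons.prems(2)])
      then show ?thesis using Meas Cons Cons.IH Cons.prems by (simp add: mult_mat_vec[OF proj_carrier])
    qed
  qed
qed

lemma proj_comm:
  assumes p: "pauli_on n p"
  shows "proj n S b * pmat n p = pmat n p * proj n S (b \<noteq> om n (snd S) p)"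
proof -
  let ?N = "2^n"
  let ?P = "pmat n p" and ?H = "pmat n (snd S)"
  have hp: "hpmat n S = sg (fst S) \<cdot>\<^sub>m ?H" by (rule hpmat_sg')
  have sb: "(if b then -1 else 1) = sg b" for b by (simp add: sg_def)
  have HP: "?H * ?P = sg (om n (snd S) p) \<cdot>\<^sub>m (?P * ?H)" by (rule pmat_comm)
  have "proj n S b * ?P = (1/2) \<cdot>\<^sub>m (?P + (sg b * sg (fst S)) \<cdot>\<^sub>m (?H * ?P))"
    unfolding proj_def hp sb
    by (simp add: mult_smult_sq[where N="2^n"] add_mult_distrib_mat[of _ ?N ?N _ _ ?N] smult_smult_mat)
  also have "\<dots> = (1/2) \<cdot>\<^sub>m (?P + (sg (b \<noteq> om n (snd S) p) * sg (fst S)) \<cdot>\<^sub>m (?P * ?H))"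
    unfolding HP by (simp add: smult_smult_mat sg_def)
  also have "\<dots> = ?P * proj n S (b \<noteq> om n (snd S) p)"
    unfolding proj_def hp sb
    by (simp add: mult_smult_sq[where N="2^n"] mult_add_distrib_mat[of _ ?N ?N _ ?N] smult_smult_mat)
  finally show ?thesis .
qed

lemma xor_list_Cons: "xor_list (a # as) (b # bs) = (a \<noteq> b) # xor_list as bs"
  by (simp add: xor_list_def)
lemma xor_list_Nil: "xor_list [] [] = []"
  by (simp add: xor_list_def)
lemma xor_list_self: "xor_list a a = replicate (length a) False"
  by (induction a) (auto simp: xor_list_def)
lemma xor_list_assoc: "length a = length b \<Longrightarrow> length b = length c \<Longrightarrow> xor_list a (xor_list b c) = xor_list (xor_list a b) c"
proof (induction a arbitrary: b c)
  case Nil then show ?case by (simp add: xor_list_def)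
next
  case (Cons x a) then show ?case by (cases b; cases c) (auto simp: xor_list_def)
qed

lemma smult_mat_vec: "A \<in> carrier_mat nr nc \<Longrightarrow> v \<in> carrier_vec nc \<Longrightarrow> (k \<cdot>\<^sub>m A) *\<^sub>v v = k \<cdot>\<^sub>v (A *\<^sub>v (v :: complex vec))"
  by (rule eq_vecI) (auto simp: scalar_prod_def sum_distrib_left mult.assoc)

lemma exec_pauli:
  assumes "\<forall>g\<in>set C. op_ok n g" "v \<in> carrier_vec (2^n)" "pauli_on n p" "length os = length (meas C)"
  shows "\<exists>c p'. cmod c = 1 \<and> pauli_on n p' \<and>
     exec n C os (pmat n p *\<^sub>v v) = c \<cdot>\<^sub>v (pmat n p' *\<^sub>v exec n C (xor_list os (flips n C p)) v)"
  using assms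
proof (induction C arbitrary: os p v)
  case Nil then show ?case
    by (intro exI[of _ 1] exI[of _ p]) (simp add: xor_list_def)
next
  case (Cons g C)
  show ?case
  proof (cases g)
    case (Gate U l)
    then have U: "is_clifford n U" using Cons.prems by auto
    note cu = clif_unit[OF U]
    obtain s where s: "U * pmat n p = sg s \<cdot>\<^sub>m (pmat n (fwd n U p) * U)"
      using U_pmat[OF U Cons.prems(3)] by blast
    have pf: "pauli_on n (fwd n U p)" using fwd_spec[OF U Cons.prems(3)] by blast
    have Uv: "U *\<^sub>v v \<in> carrier_vec (2^n)" using cu Cons.prems by simp
    have e: "U *\<^sub>v (pmat n p *\<^sub>v v) = sg s \<cdot>\<^sub>v (pmat n (fwd n U p) *\<^sub>v (U *\<^sub>v v))"
    proof -
      have "U *\<^sub>v (pmat n p *\<^sub>v v) = (U * pmat n p) *\<^sub>v v"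
        by (rule assoc_mult_mat_vec[symmetric, OF cu(1) pmat_carrier Cons.prems(2)])
      also have "\<dots> = sg s \<cdot>\<^sub>v ((pmat n (fwd n U p) * U) *\<^sub>v v)"
        unfolding s by (rule smult_mat_vec[OF mult_carrier_mat[OF pmat_carrier cu(1)] Cons.prems(2)])
      also have "\<dots> = sg s \<cdot>\<^sub>v (pmat n (fwd n U p) *\<^sub>v (U *\<^sub>v v))"
        by (simp add: assoc_mult_mat_vec[OF pmat_carrier cu(1) Cons.prems(2)])
      finally show ?thesis .
    qed
    obtain c p' where cp: "cmod c = 1" "pauli_on n p'"
      "exec n C os (pmat n (fwd n U p) *\<^sub>v (U *\<^sub>v v)) = c \<cdot>\<^sub>v (pmat n p' *\<^sub>v exec n C (xor_list os (flips n C (fwd n U p))) (U *\<^sub>v v))"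
      using Cons.IH[of "U *\<^sub>v v" "fwd n U p" os] Cons.prems Gate pf Uv by auto
    have "exec n (g # C) os (pmat n p *\<^sub>v v) = exec n C os (sg s \<cdot>\<^sub>v (pmat n (fwd n U p) *\<^sub>v (U *\<^sub>v v)))"
      using Gate e by simp
    also have "\<dots> = sg s \<cdot>\<^sub>v exec n C os (pmat n (fwd n U p) *\<^sub>v (U *\<^sub>v v))"
      using Cons.prems mult_mat_vec_carrier[OF pmat_carrier Uv] by (intro exec_smult) auto
    also have "\<dots> = (sg s * c) \<cdot>\<^sub>v (pmat n p' *\<^sub>v exec n (g # C) (xor_list os (flips n (g # C) p)) v)"
      using cp(3) Gate by (simp add: smult_smult_assoc)
    finally show ?thesis using cp(1,2) by (intro exI[of _ "sg s * c"] exI[of _ p']) (simp add: norm_mult sg_norm)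
  next
    case (Meas S l)
    then obtain b os' where os: "os = b # os'" using Cons.prems(4) by (cases os) auto
    define b' where "b' = (b \<noteq> om n p (snd S))"
    have pv: "proj n S b' *\<^sub>v v \<in> carrier_vec (2^n)" by (rule mult_mat_vec_carrier[OF proj_carrier Cons.prems(2)])
    have e: "proj n S b *\<^sub>v (pmat n p *\<^sub>v v) = pmat n p *\<^sub>v (proj n S b' *\<^sub>v v)"
    proof -
      have "proj n S b *\<^sub>v (pmat n p *\<^sub>v v) = (proj n S b * pmat n p) *\<^sub>v v"
        by (rule assoc_mult_mat_vec[symmetric, OF proj_carrier pmat_carrier Cons.prems(2)])
      also have "\<dots> = (pmat n p * proj n S b') *\<^sub>v v"
        unfolding proj_comm[OF Cons.prems(3)] b'_def by (simp add: om_sym)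
      also have "\<dots> = pmat n p *\<^sub>v (proj n S b' *\<^sub>v v)"
        by (rule assoc_mult_mat_vec[OF pmat_carrier proj_carrier Cons.prems(2)])
      finally show ?thesis .
    qed
    obtain c p' where cp: "cmod c = 1" "pauli_on n p'"
      "exec n C os' (pmat n p *\<^sub>v (proj n S b' *\<^sub>v v)) = c \<cdot>\<^sub>v (pmat n p' *\<^sub>v exec n C (xor_list os' (flips n C p)) (proj n S b' *\<^sub>v v))"
      using Cons.IH[of "proj n S b' *\<^sub>v v" p os'] Cons.prems Meas pv os by auto
    have "exec n (g # C) os (pmat n p *\<^sub>v v) = exec n C os' (pmat n p *\<^sub>v (proj n S b' *\<^sub>v v))"
      using Meas os e by simp
    also have "\<dots> = c \<cdot>\<^sub>v (pmat n p' *\<^sub>v exec n (g # C) (xor_list os (flips n (g # C) p)) v)"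
      using cp(3) Meas os by (simp add: xor_list_Cons b'_def)
    finally show ?thesis using cp(1,2) by blast
  qed
qed

lemma flips_in_code:
  assumes wf: "\<forall>g\<in>set C. op_ok n g" and z: "replicate (length (meas C)) False \<in> outcome_code n C"
    and p: "pauli_on n p"
  shows "flips n C p \<in> outcome_code n C"
proof -
  obtain \<psi> where psi: "\<psi> \<in> carrier_vec (2^n)" "sq_norm \<psi> = 1"
    "outcome_prob n C \<psi> (replicate (length (meas C)) False) \<noteq> 0"
    using z unfolding outcome_code_def by blast
  let ?f = "flips n C p"
  obtain c p' where cp: "cmod c = 1" "pauli_on n p'"
    "exec n C ?f (pmat n p *\<^sub>v \<psi>) = c \<cdot>\<^sub>v (pmat n p' *\<^sub>v exec n C (xor_list ?f ?f) \<psi>)"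
    using exec_pauli[OF wf psi(1) p, of ?f] by auto
  have ex: "exec n C (replicate (length (meas C)) False) \<psi> \<in> carrier_vec (2^n)"
    by (rule exec_carrier[OF wf psi(1)])
  have "outcome_prob n C (pmat n p *\<^sub>v \<psi>) ?f = outcome_prob n C \<psi> (replicate (length (meas C)) False)"
    unfolding outcome_prob_def cp(3) xor_list_self
    using ex by (simp add: sq_norm_smult cp(1) sq_norm_pmat)
  moreover have "pmat n p *\<^sub>v \<psi> \<in> carrier_vec (2^n)" by (rule mult_mat_vec_carrier[OF pmat_carrier psi(1)])
  moreover have "sq_norm (pmat n p *\<^sub>v \<psi>) = 1" using sq_norm_pmat[OF psi(1)] psi(2) by simp
  ultimately show ?thesis using psi(3) unfolding outcome_code_def by auto
qed


definition step :: "nat \<Rightarrow> op \<Rightarrow> pauli \<Rightarrow> pauli" where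
  "step n g p = (case g of Gate U l \<Rightarrow> fwd n U p | Meas S l \<Rightarrow> p)"

definition prp :: "nat \<Rightarrow> op list \<Rightarrow> pauli \<Rightarrow> pauli" where
  "prp n xs p = foldl (\<lambda>p g. step n g p) p xs"

lemma prp_Nil[simp]: "prp n [] p = p" by (simp add: prp_def)
lemma prp_Cons[simp]: "prp n (g # xs) p = prp n xs (step n g p)" by (simp add: prp_def)
lemma prp_append: "prp n (xs @ ys) p = prp n ys (prp n xs p)" by (simp add: prp_def)

lemma step_pauli: "op_ok n g \<Longrightarrow> pauli_on n p \<Longrightarrow> pauli_on n (step n g p)"
  by (cases g) (auto simp: step_def dest: fwd_spec)

lemma prp_pauli: "\<forall>g\<in>set xs. op_ok n g \<Longrightarrow> pauli_on n p \<Longrightarrow> pauli_on n (prp n xs p)"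
  by (induction xs arbitrary: p) (auto simp: step_pauli)

definition gl :: "nat \<Rightarrow> op list \<Rightarrow> complex mat list" where
  "gl l xs = concat (map (\<lambda>g. case g of Gate U k \<Rightarrow> (if k = l then [U] else []) | Meas S k \<Rightarrow> []) xs)"

lemma gl_simps[simp]: "gl l [] = []" "gl l (Gate U k # xs) = (if k = l then U # gl l xs else gl l xs)"
  "gl l (Meas S k # xs) = gl l xs"
  by (simp_all add: gl_def)

lemma U_level_gl: "U_level n C l = foldl (\<lambda>acc U. U * acc) (1\<^sub>m (2^n)) (gl l C)"
  by (simp add: U_level_def gl_def)

lemma gl_clif: "\<forall>g\<in>set xs. op_ok n g \<Longrightarrow> \<forall>U\<in>set (gl l xs). is_clifford n U"
proof (induction xs)
  case Nil then show ?case by simp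
next
  case (Cons g xs) then show ?case by (cases g) auto
qed

lemma U_level_clif: "\<forall>g\<in>set C. op_ok n g \<Longrightarrow> is_clifford n (U_level n C l)"
  unfolding U_level_gl by (rule clif_foldl[OF clif_one gl_clif])

lemma prp_filter_level:
  "prp n (filter (\<lambda>g. op_level g = l) xs) p = foldl (\<lambda>p U. fwd n U p) p (gl l xs)"
proof (induction xs arbitrary: p)
  case Nil then show ?case by simp
next
  case (Cons g xs) then show ?case by (cases g) (auto simp: step_def)
qed

lemma fwd_U_level:
  assumes "\<forall>g\<in>set C. op_ok n g" "pauli_on n p"
  shows "fwd n (U_level n C l) p = prp n (filter (\<lambda>g. op_level g = l) C) p"
  unfolding U_level_gl prp_filter_level
  using fwd_foldl[OF clif_one gl_clif[OF assms(1)] assms(2)] fwd_one[OF assms(2)] by simp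

lemma sorted_filter_split:
  assumes "sorted (map f xs)"
  shows "filter (\<lambda>x. f x \<le> Suc k) xs = filter (\<lambda>x. f x \<le> k) xs @ filter (\<lambda>x. f x = Suc k) xs"
  using assms
proof (induction xs)
  case Nil then show ?case by simp
next
  case (Cons x xs)
  have s: "sorted (map f xs)" and ge: "\<forall>y\<in>set xs. f x \<le> f y" using Cons.prems by auto
  show ?case
  proof (cases "f x \<le> k")
    case True then show ?thesis using Cons.IH[OF s] by simp
  next
    case False
    note F = False
    show ?thesis
    proof (cases "f x = Suc k")
      case True
      then have "filter (\<lambda>x. f x \<le> k) xs = []" using ge by (auto simp: filter_empty_conv)
      moreover have "filter (\<lambda>x. f x \<le> Suc k) xs = filter (\<lambda>x. f x = Suc k) xs"
        using ge True by (intro filter_cong) auto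
      ultimately show ?thesis using True by simp
    next
      case False
      then have "f x > Suc k" using F by simp
      then have "filter (\<lambda>x. f x \<le> Suc k) xs = []" "filter (\<lambda>x. f x \<le> k) xs = []" "filter (\<lambda>x. f x = Suc k) xs = []"
        using ge by (auto simp: filter_empty_conv)
      then show ?thesis using False F by simp
    qed
  qed
qed

lemma sorted_filter_split_lt:
  assumes "sorted (map f xs)" "\<forall>x\<in>set xs. f x \<le> L"
  shows "xs = filter (\<lambda>x. f x < L) xs @ filter (\<lambda>x. f x = L) xs"
  using assms
proof (induction xs)
  case Nil then show ?case by simp
next
  case (Cons x xs)
  have s: "sorted (map f xs)" and ge: "\<forall>y\<in>set xs. f x \<le> f y" using Cons.prems by auto
  show ?case
  proof (cases "f x < L")
    case True then show ?thesis using Cons.IH[OF s] Cons.prems by simp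
  next
    case False
    then have "f x = L" using Cons.prems by simp
    have "filter (\<lambda>x. f x < L) xs = []" using ge \<open>f x = L\<close> by (auto simp: filter_empty_conv)
    moreover have "filter (\<lambda>y. f y = L) xs = xs"
      using ge Cons.prems \<open>f x = L\<close> by (auto simp: filter_id_conv intro: antisym)
    ultimately show ?thesis using \<open>f x = L\<close> by simp
  qed
qed

definition commutes :: "complex mat \<Rightarrow> complex mat \<Rightarrow> bool" where
  "commutes U A \<longleftrightarrow> U * A = A * U"

lemma commutes_mult:
  assumes "U \<in> carrier_mat N N" "A \<in> carrier_mat N N" "B \<in> carrier_mat N N" "commutes U A" "commutes U B"
  shows "commutes U (A * B)"
proof -
  have "U * (A * B) = (U * A) * B" using assms by simp
  also have "\<dots> = A * (U * B)" using assms by (simp add: commutes_def)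
  also have "\<dots> = (A * B) * U" using assms by (simp add: commutes_def)
  finally show ?thesis by (simp add: commutes_def)
qed

lemma commutes_smult:
  assumes "U \<in> carrier_mat N N" "A \<in> carrier_mat N N" "commutes U A"
  shows "commutes U (c \<cdot>\<^sub>m A)"
  using assms by (simp add: commutes_def mult_smult_sq[where N=N])

lemma commutes_pmat_ptimes:
  assumes "U \<in> carrier_mat (2^n) (2^n)" "commutes U (pmat n a)" "commutes U (pmat n b)"
  shows "commutes U (pmat n (ptimes a b))"
proof -
  have "pmat n (ptimes a b) = (1 / cm n a b) \<cdot>\<^sub>m (pmat n a * pmat n b)"
    using pmat_mult[of n a b] cm_nz[of n a b] by (intro smult_cancel) auto
  moreover have "commutes U (pmat n a * pmat n b)"
    by (rule commutes_mult[OF assms(1) pmat_carrier pmat_carrier assms(2,3)])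
  ultimately show ?thesis
    using commutes_smult[OF assms(1) mult_carrier_sq[OF pmat_carrier pmat_carrier]] by simp
qed

definition sres :: "nat \<Rightarrow> pauli \<Rightarrow> pauli" where
  "sres k s = (\<lambda>i. i < k \<and> fst s i, \<lambda>i. i < k \<and> snd s i)"

lemma sres_Suc: "sres (Suc k) s = ptimes (sres k s)
   (ptimes (if fst s k then pX k else pid) (if snd s k then pZ k else pid))"
  by (auto simp: sres_def ptimes_def pX_def pZ_def pid_def fun_eq_iff less_Suc_eq)

lemma gate_commutes:
  assumes U: "is_clifford n U" and s: "pauli_on n s"
    and disj: "gate_support n U \<inter> {q. q < n \<and> (fst s q \<or> snd s q)} = {}"
  shows "commutes U (pmat n s)"
proof -
  note cu = clif_unit[OF U]
  have one: "commutes U (pmat n pid)" using cu by (simp add: commutes_def pmat_pid)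
  have k: "commutes U (pmat n (sres k s))" if "k \<le> n" for k
    using that
  proof (induction k)
    case 0
    have "sres 0 s = pid" by (simp add: sres_def pid_def)
    then show ?case using one by simp
  next
    case (Suc k)
    have cx: "commutes U (pmat n (if fst s k then pX k else pid))"
    proof (cases "fst s k")
      case True
      then have "k \<notin> gate_support n U" using disj Suc.prems by auto
      then show ?thesis using True Suc.prems by (auto simp: gate_support_def commutes_def)
    qed (simp add: one)
    have cz: "commutes U (pmat n (if snd s k then pZ k else pid))"
    proof (cases "snd s k")
      case True
      then have "k \<notin> gate_support n U" using disj Suc.prems by auto
      then show ?thesis using True Suc.prems by (auto simp: gate_support_def commutes_def)
    qed (simp add: one)
    show ?case unfolding sres_Suc
      using Suc commutes_pmat_ptimes[OF cu(1)] cx cz by simp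
  qed
  have "sres n s = s" using s by (auto simp: sres_def pauli_on_def prod_eq_iff fun_eq_iff) (meson not_less)+
  then show ?thesis using k[of n] by simp
qed

lemma om_fwd_commuting:
  assumes U: "is_clifford n U" and p: "pauli_on n p" and s: "pauli_on n s"
    and disj: "gate_support n U \<inter> {q. q < n \<and> (fst s q \<or> snd s q)} = {}"
  shows "om n (fwd n U p) s = om n p s"
proof -
  note cu = clif_unit[OF U]
  have c: "U * pmat n s = pmat n s * U" using gate_commutes[OF assms(1,3,4)] by (simp add: commutes_def)
  have "adj U * pmat n s * U = adj U * (pmat n s * U)"
    by (rule assoc_mult_mat[OF cu(2) pmat_carrier cu(1)])
  also have "\<dots> = adj U * (U * pmat n s)" by (simp add: c)
  also have "\<dots> = sg False \<cdot>\<^sub>m pmat n s" using clif_cancel(1)[OF U pmat_carrier] by (simp add: sg_def)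
  finally have "conjP n U s = s" by (rule conjP_uniq[OF U s s])
  then show ?thesis using om_fwd_conj[OF U p s] by simp
qed


lemma meas_set: "(S,l) \<in> set (meas C) \<longleftrightarrow> Meas S l \<in> set C"
proof (induction C)
  case Nil then show ?case by simp
next
  case (Cons g C) then show ?case by (cases g) auto
qed

lemma meas_nth_in: "j < length (meas C) \<Longrightarrow> Meas (fst (meas C ! j)) (snd (meas C ! j)) \<in> set C"
  using meas_set[of "fst (meas C ! j)" "snd (meas C ! j)" C] nth_mem[of j "meas C"] by simp

lemma wf_ok: "wf_circuit n C \<Longrightarrow> \<forall>g\<in>set C. op_ok n g"
  by (simp add: wf_circuit_def)
lemma wf_lvl: "wf_circuit n C \<Longrightarrow> g \<in> set C \<Longrightarrow> 1 \<le> op_level g"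
  by (simp add: wf_circuit_def)
lemma wf_sorted: "wf_circuit n C \<Longrightarrow> sorted (map op_level C)"
  by (simp add: wf_circuit_def)
lemma lvl_le_depth: "g \<in> set C \<Longrightarrow> op_level g \<le> depth C"
  unfolding depth_def by (rule Max_ge) auto

lemma meas_pauli: "wf_circuit n C \<Longrightarrow> j < length (meas C) \<Longrightarrow> pauli_on n (snd (fst (meas C ! j)))"
  using meas_nth_in[of j C] wf_ok[of n C] by fastforce
lemma meas_lvl: "wf_circuit n C \<Longrightarrow> j < length (meas C) \<Longrightarrow> 1 \<le> snd (meas C ! j) \<and> snd (meas C ! j) \<le> depth C"
  using meas_nth_in[of j C] wf_lvl[of n C] lvl_le_depth[of _ C] by fastforce

definition Ek :: "nat \<Rightarrow> op list \<Rightarrow> pauli \<Rightarrow> nat \<Rightarrow> pauli" where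
  "Ek n C E k = prp n (filter (\<lambda>g. op_level g \<le> k) C) E"

lemma Ek_0: "wf_circuit n C \<Longrightarrow> Ek n C E 0 = E"
proof -
  assume w: "wf_circuit n C"
  have "filter (\<lambda>g. op_level g \<le> 0) C = []"
  proof -
    have "\<forall>g\<in>set C. \<not> op_level g \<le> 0" using wf_lvl[OF w] by fastforce
    then show ?thesis by (simp add: filter_empty_conv)
  qed
  then show ?thesis by (simp add: Ek_def)
qed

lemma Ek_pauli: "wf_circuit n C \<Longrightarrow> pauli_on n E \<Longrightarrow> pauli_on n (Ek n C E k)"
  unfolding Ek_def by (rule prp_pauli) (auto dest: wf_ok)

lemma Ek_Suc:
  assumes w: "wf_circuit n C" and E: "pauli_on n E"
  shows "Ek n C E (Suc k) = fwd n (U_level n C (Suc k)) (Ek n C E k)"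
proof -
  have "Ek n C E (Suc k) = prp n (filter (\<lambda>g. op_level g = Suc k) C) (Ek n C E k)"
    unfolding Ek_def sorted_filter_split[OF wf_sorted[OF w]] prp_append ..
  also have "\<dots> = fwd n (U_level n C (Suc k)) (Ek n C E k)"
    by (rule fwd_U_level[OF wf_ok[OF w] Ek_pauli[OF w E], symmetric])
  finally show ?thesis .
qed

lemma om_prp_commuting:
  assumes "\<forall>g\<in>set ys. op_ok n g"
    "\<forall>U l. Gate U l \<in> set ys \<longrightarrow> gate_support n U \<inter> {q. q < n \<and> (fst s q \<or> snd s q)} = {}"
    "pauli_on n p" "pauli_on n s"
  shows "om n (prp n ys p) s = om n p s"
  using assms
proof (induction ys arbitrary: p)
  case Nil then show ?case by simp
next
  case (Cons g ys)
  show ?case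
  proof (cases g)
    case (Gate U l)
    then have U: "is_clifford n U" using Cons.prems by auto
    have pf: "pauli_on n (fwd n U p)" using fwd_spec[OF U Cons.prems(3)] by blast
    have "om n (prp n ys (fwd n U p)) s = om n (fwd n U p) s"
      using Cons.IH[OF _ _ pf Cons.prems(4)] Cons.prems by auto
    also have "\<dots> = om n p s"
      using om_fwd_commuting[OF U Cons.prems(3,4)] Cons.prems(2) Gate by auto
    finally show ?thesis using Gate by (simp add: step_def)
  next
    case (Meas S l)
    then show ?thesis using Cons by (simp add: step_def)
  qed
qed

lemma position_lemma:
  assumes w: "wf_circuit n C" and E: "pauli_on n E" and C: "C = pre @ Meas S L # rest"
  shows "om n (prp n pre E) (snd S) = om n (Ek n C E (L - 1)) (snd S)"
proof -
  have srt: "sorted (map op_level C)" by (rule wf_sorted[OF w])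
  then have le: "\<forall>g\<in>set pre. op_level g \<le> L" and ge: "\<forall>g\<in>set rest. L \<le> op_level g"
    and sp: "sorted (map op_level pre)"
    unfolding C by (auto simp: sorted_append)
  have L1: "1 \<le> L" using wf_lvl[OF w, of "Meas S L"] C by simp
  have spl: "pre = filter (\<lambda>g. op_level g < L) pre @ filter (\<lambda>g. op_level g = L) pre"
    by (rule sorted_filter_split_lt[OF sp le])
  have f1: "filter (\<lambda>g. op_level g \<le> L - 1) C = filter (\<lambda>g. op_level g < L) pre"
  proof -
    have "filter (\<lambda>g. op_level g \<le> L - 1) rest = []" using ge L1 by (auto simp: filter_empty_conv)
    moreover have "filter (\<lambda>g. op_level g \<le> L - 1) pre = filter (\<lambda>g. op_level g < L) pre"
      using L1 by (intro filter_cong) auto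
    ultimately show ?thesis using L1 C by simp
  qed
  have pS: "pauli_on n (snd S)" using w C by (auto simp: wf_circuit_def)
  have ok: "\<forall>g\<in>set C. op_ok n g" by (rule wf_ok[OF w])
  have disj: "gate_support n U \<inter> {q. q < n \<and> (fst (snd S) q \<or> snd (snd S) q)} = {}"
    if g: "Gate U l \<in> set (filter (\<lambda>g. op_level g = L) pre)" for U l
  proof -
    from g have gin: "Gate U l \<in> set pre" and lL: "l = L" by auto
    then obtain i where i: "i < length pre" "pre ! i = Gate U l" by (auto simp: in_set_conv_nth)
    have "C ! i = Gate U l" using i C by (simp add: nth_append)
    moreover have "C ! length pre = Meas S L" using C by simp
    moreover have "length pre < length C" using C by simp
    ultimately have "op_support n (C ! i) \<inter> op_support n (C ! length pre) = {}"
      using w i lL unfolding wf_circuit_def by (metis op_level.simps)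
    then show ?thesis using \<open>C ! i = Gate U l\<close> \<open>C ! length pre = Meas S L\<close> by simp
  qed
  have "prp n pre E = prp n (filter (\<lambda>g. op_level g = L) pre) (Ek n C E (L - 1))"
    unfolding Ek_def f1 by (subst spl) (simp add: prp_append)
  then have "om n (prp n pre E) (snd S) = om n (prp n (filter (\<lambda>g. op_level g = L) pre) (Ek n C E (L - 1))) (snd S)"
    by simp
  also have "\<dots> = om n (Ek n C E (L - 1)) (snd S)"
    using ok C disj by (intro om_prp_commuting[OF _ _ Ek_pauli[OF w E] pS]) auto
  finally show ?thesis .
qed

lemma flips_levels:
  assumes w: "wf_circuit n C0" and E: "pauli_on n E"
  shows "C0 = pre @ C' \<Longrightarrow> list_all2 (\<lambda>f x. f = om n (Ek n C0 E (snd x - 1)) (snd (fst x))) (flips n C' (prp n pre E)) (meas C')"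
proof (induction C' arbitrary: pre)
  case Nil then show ?case by simp
next
  case (Cons g C')
  show ?case
  proof (cases g)
    case (Gate U l)
    have "C0 = (pre @ [g]) @ C'" using Cons.prems by simp
    from Cons.IH[OF this] show ?thesis using Gate by (simp add: prp_append step_def)
  next
    case (Meas S L)
    have "C0 = (pre @ [g]) @ C'" using Cons.prems by simp
    from Cons.IH[OF this] have ih: "list_all2 (\<lambda>f x. f = om n (Ek n C0 E (snd x - 1)) (snd (fst x))) (flips n C' (prp n pre E)) (meas C')"
      using Meas by (simp add: prp_append step_def)
    have "om n (prp n pre E) (snd S) = om n (Ek n C0 E (L - 1)) (snd S)"
      using position_lemma[OF w E] Cons.prems Meas by simp
    then show ?thesis using ih Meas by simp
  qed
qed

lemma flips_nth:
  assumes w: "wf_circuit n C" and E: "pauli_on n E" and j: "j < length (meas C)"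
  shows "flips n C E ! j = om n (Ek n C E (snd (meas C ! j) - 1)) (snd (fst (meas C ! j)))"
  using flips_levels[OF w E, of "[]" C] j by (simp add: list_all2_conv_all_nth)


declare sum_of_bool_eq[simp del]

lemma backcum_pauli:
  assumes "wf_circuit n C" "\<forall>k. pauli_on n (F k)"
  shows "pauli_on n (backcum n C F k)"
  using assms
proof (induction n C F k rule: backcum.induct)
  case (1 n C F l)
  show ?case
  proof (cases "depth C \<le> l")
    case True then show ?thesis using 1 by (subst backcum.simps) simp
  next
    case False
    have "pauli_on n (backcum n C F (Suc l))" using 1 False by blast
    then have "pauli_on n (conjP n (U_level n C (Suc l)) (backcum n C F (Suc l)))"
      using conjP_spec[OF U_level_clif[OF wf_ok[OF "1.prems"(1)]]] by blast
    then show ?thesis using False 1 by (subst backcum.simps) (simp add: pauli_on_ptimes)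
  qed
qed

lemma backcum_om:
  assumes "wf_circuit n C" "pauli_on n E" "\<forall>k. pauli_on n (F k)"
  shows "k \<le> depth C \<Longrightarrow> om n (Ek n C E k) (backcum n C F k) = odd (\<Sum>k'\<in>{k..depth C}. (of_bool (om n (Ek n C E k') (F k')) :: nat))"
  using assms
proof (induction n C F k rule: backcum.induct)
  case (1 n C F l)
  show ?case
  proof (cases "depth C \<le> l")
    case True
    then have "l = depth C" using "1.prems" by simp
    then have "(\<Sum>k'\<in>{l..depth C}. (of_bool (om n (Ek n C E k') (F k')) :: nat)) = of_bool (om n (Ek n C E l) (F l))"
      by simp
    then show ?thesis using True by (subst backcum.simps) simp
  next
    case False
    note w = "1.prems"(2)
    let ?U = "U_level n C (Suc l)"
    let ?B = "backcum n C F (Suc l)"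
    have U: "is_clifford n ?U" by (rule U_level_clif[OF wf_ok[OF w]])
    have Bp: "pauli_on n ?B" by (rule backcum_pauli[OF w "1.prems"(4)])
    have Ep: "pauli_on n (Ek n C E l)" by (rule Ek_pauli[OF w "1.prems"(3)])
    have ih: "om n (Ek n C E (Suc l)) ?B = odd (\<Sum>k'\<in>{Suc l..depth C}. (of_bool (om n (Ek n C E k') (F k')) :: nat))"
      using "1.IH"[OF False] False "1.prems" by simp
    have "om n (Ek n C E l) (backcum n C F l) = om n (Ek n C E l) (ptimes (F l) (conjP n ?U ?B))"
      using False by (subst backcum.simps) simp
    also have "\<dots> = (om n (Ek n C E l) (F l) \<noteq> om n (Ek n C E l) (conjP n ?U ?B))"
      by (rule om_ptimes)
    also have "om n (Ek n C E l) (conjP n ?U ?B) = om n (Ek n C E (Suc l)) ?B"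
      using om_fwd_conj[OF U Ep Bp] Ek_Suc[OF w "1.prems"(3)] by simp
    finally show ?thesis using ih False
      by (simp add: sum.atLeast_Suc_atMost[of l "depth C"])
  qed
qed

lemma foldr_om:
  "om n e (foldr (\<lambda>j acc. if P j then ptimes (T j) acc else acc) js a) =
     (odd (\<Sum>j\<leftarrow>js. (of_bool (P j \<and> om n e (T j)) :: nat)) \<noteq> om n e a)"
  by (induction js) (auto simp: om_ptimes)

lemma foldr_pauli:
  "(\<forall>j\<in>set js. P j \<longrightarrow> pauli_on n (T j)) \<Longrightarrow> pauli_on n a \<Longrightarrow>
    pauli_on n (foldr (\<lambda>j acc. if P j then ptimes (T j) acc else acc) js a)"
  by (induction js) (auto simp: pauli_on_ptimes)

lemma foldr_none:
  "(\<forall>j\<in>set js. \<not> P j) \<Longrightarrow> foldr (\<lambda>j acc. if P j then ptimes (T j) acc else acc) js a = a"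
  by (induction js) auto

lemma sum_list_upt0: "(\<Sum>j\<leftarrow>[0..<m]. f j) = (\<Sum>j<m. (f j :: nat))"
  by (induction m) auto

lemma Fu_om: "om n e (Fu C u k) = odd (\<Sum>j<length (meas C).
    (of_bool (u ! j \<and> snd (meas C ! j) - 1 = k \<and> om n e (snd (fst (meas C ! j)))) :: nat))"
  unfolding Fu_def foldr_om om_pid sum_list_upt0 by (simp add: conj_assoc)

lemma Fu_pauli: "wf_circuit n C \<Longrightarrow> pauli_on n (Fu C u k)"
  unfolding Fu_def by (rule foldr_pauli) (auto simp: meas_pauli pauli_on_pid)

lemma Fu_pid: "(\<forall>j<length (meas C). \<not> (u ! j \<and> snd (meas C ! j) - 1 = k)) \<Longrightarrow> Fu C u k = pid"
  unfolding Fu_def by (rule foldr_none) auto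

lemma odd_sum_par: "finite K \<Longrightarrow> odd (\<Sum>k\<in>K. (of_bool (odd (a k)) :: nat)) = odd (\<Sum>k\<in>K. a k)"
  by (induction K rule: finite_induct) auto

lemma sum_of_bool_card: "(\<Sum>j<(m::nat). (of_bool (P j) :: nat)) = card {j. j < m \<and> P j}"
  by (induction m) (auto simp: card_Suc_filter)

lemma sum_delta_bool:
  assumes "finite K" "c \<in> K"
  shows "(\<Sum>k\<in>K. (of_bool (A \<and> c = k \<and> X k) :: nat)) = of_bool (A \<and> X c)"
proof -
  have "(\<Sum>k\<in>K. (of_bool (A \<and> c = k \<and> X k) :: nat)) = (\<Sum>k\<in>K. (if k = c then of_bool (A \<and> X c) else 0))"
    by (rule sum.cong) auto
  also have "\<dots> = of_bool (A \<and> X c)" using assms by (simp add: sum.delta)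
  finally show ?thesis .
qed

lemma par_single: "par k (\<lambda>i. i = q \<and> P i) = (q < k \<and> P q)"
  by (induction k) (auto simp: less_Suc_eq)

lemma om_pX: "om n (pX q) b = (q < n \<and> snd b q)"
proof -
  have "om n (pX q) b = par n (\<lambda>i. i = q \<and> snd b i)"
    unfolding om_def pX_def by (rule par_cong) auto
  then show ?thesis by (simp add: par_single)
qed

lemma om_pZ: "om n (pZ q) b = (q < n \<and> fst b q)"
proof -
  have "om n (pZ q) b = par n (\<lambda>i. i = q \<and> fst b i)"
    unfolding om_def pZ_def by (rule par_cong) auto
  then show ?thesis by (simp add: par_single)
qed

lemma om_zero_pid:
  assumes "pauli_on n b" "\<forall>E. pauli_on n E \<longrightarrow> \<not> om n E b"
  shows "b = pid"
proof -
  have "\<not> snd b q \<and> \<not> fst b q" for q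
  proof (cases "q < n")
    case True
    have "pauli_on n (pX q)" "pauli_on n (pZ q)" using True by (auto simp: pauli_on_def pX_def pZ_def)
    then have "\<not> om n (pX q) b" "\<not> om n (pZ q) b" using assms(2) by blast+
    then show ?thesis using om_pX[of n q b] om_pZ[of n q b] True by simp
  next
    case False then show ?thesis using assms(1) by (auto simp: pauli_on_def)
  qed
  then show ?thesis by (auto simp: pid_def prod_eq_iff fun_eq_iff)
qed

lemma backcum0_pid:
  assumes w: "wf_circuit n C"
    and lin: "linear_code (length (meas C)) (outcome_code n C)"
    and du: "u \<in> dual_code (length (meas C)) (outcome_code n C)"
  shows "backcum n C (Fu C u) 0 = pid"
proof (rule om_zero_pid)
  let ?m = "length (meas C)" and ?D = "depth C"
  have Fp: "\<forall>k. pauli_on n (Fu C u k)" using Fu_pauli[OF w] by blast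
  show "pauli_on n (backcum n C (Fu C u) 0)" by (rule backcum_pauli[OF w Fp])
  show "\<forall>E. pauli_on n E \<longrightarrow> \<not> om n E (backcum n C (Fu C u) 0)"
  proof (intro allI impI)
    fix E assume E: "pauli_on n E"
    let ?f = "flips n C E"
    have z: "replicate ?m False \<in> outcome_code n C" using lin by (simp add: linear_code_def)
    have fin: "?f \<in> outcome_code n C" by (rule flips_in_code[OF wf_ok[OF w] z E])
    have ev: "even (card {j. j < ?m \<and> u ! j \<and> ?f ! j})" using du fin by (simp add: dual_code_def)
    let ?a = "\<lambda>j k. (of_bool (u ! j \<and> snd (meas C ! j) - 1 = k \<and> om n (Ek n C E k) (snd (fst (meas C ! j)))) :: nat)"
    have "om n E (backcum n C (Fu C u) 0) = om n (Ek n C E 0) (backcum n C (Fu C u) 0)"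
      by (simp add: Ek_0[OF w])
    also have "\<dots> = odd (\<Sum>k\<in>{0..?D}. (of_bool (om n (Ek n C E k) (Fu C u k)) :: nat))"
      by (rule backcum_om[OF w E Fp]) simp
    also have "\<dots> = odd (\<Sum>k\<in>{0..?D}. (of_bool (odd (\<Sum>j<?m. ?a j k)) :: nat))"
      by (simp add: Fu_om)
    also have "\<dots> = odd (\<Sum>k\<in>{0..?D}. \<Sum>j<?m. ?a j k)"
      by (rule odd_sum_par) simp
    also have "(\<Sum>k\<in>{0..?D}. \<Sum>j<?m. ?a j k) = (\<Sum>j<?m. \<Sum>k\<in>{0..?D}. ?a j k)"
      by (rule sum.swap)
    also have "\<dots> = (\<Sum>j<?m. (of_bool (u ! j \<and> ?f ! j) :: nat))"
    proof (rule sum.cong[OF refl])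
      fix j assume "j \<in> {..<?m}"
      then have j: "j < ?m" by simp
      have "snd (meas C ! j) - 1 \<in> {0..?D}" using meas_lvl[OF w j] by auto
      then have "(\<Sum>k\<in>{0..?D}. ?a j k) = of_bool (u ! j \<and> om n (Ek n C E (snd (meas C ! j) - 1)) (snd (fst (meas C ! j))))"
        by (intro sum_delta_bool) auto
      then show "(\<Sum>k\<in>{0..?D}. ?a j k) = of_bool (u ! j \<and> ?f ! j)"
        by (simp add: flips_nth[OF w E j])
    qed
    also have "\<dots> = card {j. j < ?m \<and> u ! j \<and> ?f ! j}" by (rule sum_of_bool_card)
    finally show "\<not> om n E (backcum n C (Fu C u) 0)" using ev by simp
  qed
qed

theorem mainTheorem20:
  fixes n :: nat and C :: "op list" and u :: "bool list" and l :: nat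
  assumes "wf_circuit n C"
    and "linear_code (length (meas C)) (outcome_code n C)"
    and "u \<in> dual_code (length (meas C)) (outcome_code n C)"
    and "True \<in> set u"
    and "l \<le> depth C"
    and "l < Min {snd (meas C ! j) | j. j < length (meas C) \<and> u ! j}
         \<or> Max {snd (meas C ! j) | j. j < length (meas C) \<and> u ! j} \<le> l"
  shows "backcum n C (Fu C u) l = pid"
proof -
  note w = assms(1)
  let ?m = "length (meas C)" and ?D = "depth C"
  let ?S = "{snd (meas C ! j) | j. j < length (meas C) \<and> u ! j}"
  have finS: "finite ?S"
  proof -
    have "?S \<subseteq> (\<lambda>j. snd (meas C ! j)) ` {..<?m}" by auto
    then show ?thesis by (rule finite_subset) auto
  qed
  have inS: "snd (meas C ! j) \<in> ?S" if "j < ?m" "u ! j" for j using that by auto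
  have Fp: "\<forall>k. pauli_on n (Fu C u k)" using Fu_pauli[OF w] by blast
  have U: "is_clifford n (U_level n C k)" for k by (rule U_level_clif[OF wf_ok[OF w]])
  show ?thesis using assms(6)
  proof
    assume lt: "l < Min ?S"
    have "\<forall>l'. l' \<le> l \<longrightarrow> backcum n C (Fu C u) l' = pid"
    proof (intro allI)
      fix l' show "l' \<le> l \<longrightarrow> backcum n C (Fu C u) l' = pid"
      proof (induction l')
        case 0 show ?case using backcum0_pid[OF w assms(2,3)] by simp
      next
        case (Suc k)
        show ?case
        proof
          assume kl: "Suc k \<le> l"
          then have b0: "backcum n C (Fu C u) k = pid" using Suc.IH by simp
          have nd: "\<not> ?D \<le> k" using kl assms(5) by simp
          have "Fu C u k = pid"
          proof (rule Fu_pid, intro allI impI notI)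
            fix j assume j: "j < ?m" and c: "u ! j \<and> snd (meas C ! j) - 1 = k"
            have "Min ?S \<le> snd (meas C ! j)" using inS[OF j] c finS by (intro Min_le) auto
            then show False using c lt kl by linarith
          qed
          then have "conjP n (U_level n C (Suc k)) (backcum n C (Fu C u) (Suc k)) = pid"
            using b0 nd by (subst (asm) backcum.simps) simp
          then show "backcum n C (Fu C u) (Suc k) = pid"
            by (rule conjP_eq_pid[OF U backcum_pauli[OF w Fp]])
        qed
      qed
    qed
    then show ?thesis by simp
  next
    assume ge: "Max ?S \<le> l"
    have main: "l \<le> k \<Longrightarrow> backcum n C (Fu C u) k = pid" for k
    proof (induction "?D - k" arbitrary: k rule: less_induct)
      case less
      have "Fu C u k = pid"
      proof (rule Fu_pid, intro allI impI notI)
        fix j assume j: "j < ?m" and c: "u ! j \<and> snd (meas C ! j) - 1 = k"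
        have "snd (meas C ! j) \<le> Max ?S" using inS[OF j] c finS by (intro Max_ge) auto
        moreover have "1 \<le> snd (meas C ! j)" using meas_lvl[OF w j] by simp
        ultimately show False using c ge less.prems by linarith
      qed
      show ?case
      proof (cases "?D \<le> k")
        case True
        then show ?thesis using \<open>Fu C u k = pid\<close> by (subst backcum.simps) simp
      next
        case False
        have "backcum n C (Fu C u) (Suc k) = pid"
          using less.hyps[of "Suc k"] False less.prems by simp
        then show ?thesis using False \<open>Fu C u k = pid\<close>
          by (subst backcum.simps) (simp add: conjP_pid[OF U])
      qed
    qed
    then show ?thesis by simp
  qed
qed


end
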